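(* Let $\tau$ be an infinitesimal bending of an isometric immersion $f\colon M^n\to\mathbb{R}^{n+p}$, $p\ge2$, satisfying condition $( * )$ with unit normal $\eta$ and $\xi\in\Gamma(R)$. Then the bilinear form $\varphi\colon TM\times(f_*TM\oplus P)\to R\oplus R$ defined by $$\varphi(X,\lambda)=\big((\tilde\nabla_X\lambda)_R+((\tilde\nabla_X\bar L)\lambda)_R,\ (\tilde\nabla_X\lambda)_R-((\tilde\nabla_X\bar L)\lambda)_R\big)$$ is flat with respect to the indefinite inner product $\langle\!\langle(\xi_1,\mu_1),(\xi_2,\mu_2)\rangle\!\rangle=\langle\xi_1,\xi_2\rangle-\langle\mu_1,\mu_2\rangle$ on $R\oplus R$, i.e. $\langle\!\langle\varphi(X,\lambda),\varphi(Y,\delta)\rangle\!\rangle-\langle\!\langle\varphi(X,\delta),\varphi(Y,\lambda)\rangle\!\rangle=0$ for all $X,Y$ tangent and $\lambda,\delta\in f_*TM\oplus P$.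
   Context: $\alpha$ is the second fundamental form of $f$, $N_fM$ its normal bundle, $\tilde\nabla$ the Euclidean connection. An infinitesimal bending is a smooth $\tau\colon M\to\mathbb{R}^{n+p}$ with $\langle f_*X,\tilde\nabla_X\tau\rangle=0$ for all tangent $X$. Set $LX=\tilde\nabla_X\tau$, $B(X,Y)=\tilde\nabla_X(LY)-L\nabla_XY$, and $\beta$ the normal component of $B$. Condition $( * )$: there are a unit $\eta\in\Gamma(N_fM)$ and $\xi\in\Gamma(R)$, where $N_fM=P\oplus R$ orthogonally with $P=\mathrm{span}\{\eta\}$, such that $\langle\beta(X,Y),\eta\rangle+\langle\alpha(X,Y),\xi\rangle=0$ for all $X,Y$. The tensor $\bar L$ on $f_*TM\oplus P$ is $\bar L(f_*X)=LX$ and $\bar L\eta=f_*Y+\xi$, where $\langle Y,X\rangle+\langle LX,\eta\rangle=0$ for all $X$. $(\tilde\nabla_X\bar L)\lambda=\tilde\nabla_X\bar L\lambda-\bar L\nabla'_X\lambda$, with $\nabla'$ the connection induced on $f_*TM\oplus P$; $(\cdot)_R$ is orthogonal projection onto $R$. *)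

theory Defs
  imports "HOL-Analysis.Analysis"
begin

text \<open>Local, extrinsic model. M is an open set U of coordinates in R^n, f an immersion
  into R^(n+p); tangent vectors X at x are coordinate vectors, f_* X = Df(x) X.
  Vector fields along f are maps U to R^(n+p); the Euclidean connection is the
  ordinary directional derivative.\<close>

coinductive smooth_on :: "'a::real_normed_vector set \<Rightarrow> ('a \<Rightarrow> 'b::real_normed_vector) \<Rightarrow> bool"
  where "f differentiable_on U \<Longrightarrow> (\<forall>v. smooth_on U (\<lambda>x. frechet_derivative f (at x) v))
         \<Longrightarrow> smooth_on U f"

definition D :: "('a::real_normed_vector \<Rightarrow> 'b::real_normed_vector) \<Rightarrow> 'a \<Rightarrow> 'a \<Rightarrow> 'b" where
  "D V x X = frechet_derivative V (at x) X"

definition proj :: "'a::real_inner set \<Rightarrow> 'a \<Rightarrow> 'a" where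
  "proj S v = (THE q. q \<in> S \<and> (\<forall>w\<in>S. inner (v - q) w = 0))"

definition tan_sp :: "('a::real_normed_vector \<Rightarrow> 'b::real_inner) \<Rightarrow> 'a \<Rightarrow> 'b set" where
  "tan_sp f x = range (D f x)"

definition nor_sp :: "('a::real_normed_vector \<Rightarrow> 'b::real_inner) \<Rightarrow> 'a \<Rightarrow> 'b set" where
  "nor_sp f x = {v. \<forall>w\<in>tan_sp f x. inner v w = 0}"

definition immersion_on :: "'a::real_normed_vector set \<Rightarrow> ('a \<Rightarrow> 'b::real_normed_vector) \<Rightarrow> bool" where
  "immersion_on U f \<longleftrightarrow> smooth_on U f \<and> (\<forall>x\<in>U. inj (D f x))"

definition sff :: "('a::real_normed_vector \<Rightarrow> 'b::real_inner) \<Rightarrow> 'a \<Rightarrow> 'a \<Rightarrow> 'a \<Rightarrow> 'b" where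
  "sff f x X Y = proj (nor_sp f x) (D (\<lambda>z. D f z Y) x X)"

text \<open>Levi-Civita connection of the induced metric, for a tangent field V (given as
  f_*TM-valued map): f_*(nabla_X V) = tangent part of the Euclidean derivative.\<close>
definition lc :: "('a::real_normed_vector \<Rightarrow> 'b::real_inner) \<Rightarrow> ('a \<Rightarrow> 'b) \<Rightarrow> 'a \<Rightarrow> 'a \<Rightarrow> 'b" where
  "lc f V x X = proj (tan_sp f x) (D V x X)"

definition infinitesimal_bending :: "'a::real_normed_vector set \<Rightarrow> ('a \<Rightarrow> 'b::real_inner) \<Rightarrow> ('a \<Rightarrow> 'b) \<Rightarrow> bool" where
  "infinitesimal_bending U f \<tau> \<longleftrightarrow> smooth_on U \<tau> \<and> (\<forall>x\<in>U. \<forall>X. inner (D f x X) (D \<tau> x X) = 0)"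

text \<open>L applied to a tangent vector w = f_* X: L w = tilde-nabla_X tau.\<close>
definition Lop :: "('a::real_normed_vector \<Rightarrow> 'b::real_inner) \<Rightarrow> ('a \<Rightarrow> 'b) \<Rightarrow> 'a \<Rightarrow> 'b \<Rightarrow> 'b" where
  "Lop f \<tau> x w = D \<tau> x (THE X. D f x X = w)"

text \<open>B(X,Y) = tilde-nabla_X (L Y) - L nabla_X Y, computed with the coordinate field
  extending Y (B is tensorial); beta is its normal component.\<close>
definition Bten :: "('a::real_normed_vector \<Rightarrow> 'b::real_inner) \<Rightarrow> ('a \<Rightarrow> 'b) \<Rightarrow> 'a \<Rightarrow> 'a \<Rightarrow> 'a \<Rightarrow> 'b" where
  "Bten f \<tau> x X Y = D (\<lambda>z. Lop f \<tau> z (D f z Y)) x X - Lop f \<tau> x (lc f (\<lambda>z. D f z Y) x X)"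

definition beta :: "('a::real_normed_vector \<Rightarrow> 'b::real_inner) \<Rightarrow> ('a \<Rightarrow> 'b) \<Rightarrow> 'a \<Rightarrow> 'a \<Rightarrow> 'a \<Rightarrow> 'b" where
  "beta f \<tau> x X Y = proj (nor_sp f x) (Bten f \<tau> x X Y)"

text \<open>The subbundle R (orthogonal complement of P = span eta in the normal bundle)
  and the bundle f_*TM + P.\<close>
definition Rsp :: "('a::real_normed_vector \<Rightarrow> 'b::real_inner) \<Rightarrow> ('a \<Rightarrow> 'b) \<Rightarrow> 'a \<Rightarrow> 'b set" where
  "Rsp f \<eta> x = {v \<in> nor_sp f x. inner v (\<eta> x) = 0}"

definition Wsp :: "('a::real_normed_vector \<Rightarrow> 'b::real_inner) \<Rightarrow> ('a \<Rightarrow> 'b) \<Rightarrow> 'a \<Rightarrow> 'b set" where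
  "Wsp f \<eta> x = {w + t *\<^sub>R \<eta> x | w t. w \<in> tan_sp f x}"

definition cond_star :: "'a::real_normed_vector set \<Rightarrow> ('a \<Rightarrow> 'b::real_inner) \<Rightarrow> ('a \<Rightarrow> 'b) \<Rightarrow> ('a \<Rightarrow> 'b) \<Rightarrow> ('a \<Rightarrow> 'b) \<Rightarrow> bool" where
  "cond_star U f \<tau> \<eta> \<xi> \<longleftrightarrow> smooth_on U \<eta> \<and> smooth_on U \<xi> \<and>
     (\<forall>x\<in>U. \<eta> x \<in> nor_sp f x \<and> norm (\<eta> x) = 1 \<and> \<xi> x \<in> Rsp f \<eta> x \<and>
        (\<forall>X Y. inner (beta f \<tau> x X Y) (\<eta> x) + inner (sff f x X Y) (\<xi> x) = 0))"

definition Ytan :: "('a::real_normed_vector \<Rightarrow> 'b::real_inner) \<Rightarrow> ('a \<Rightarrow> 'b) \<Rightarrow> ('a \<Rightarrow> 'b) \<Rightarrow> 'a \<Rightarrow> 'b" where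
  "Ytan f \<tau> \<eta> x = (THE y. y \<in> tan_sp f x \<and> (\<forall>X. inner y (D f x X) + inner (D \<tau> x X) (\<eta> x) = 0))"

text \<open>The tensor bar L on f_*TM + P: bar L (f_* X) = L X, bar L eta = f_* Y + xi.\<close>
definition Lbar :: "('a::real_normed_vector \<Rightarrow> 'b::real_inner) \<Rightarrow> ('a \<Rightarrow> 'b) \<Rightarrow> ('a \<Rightarrow> 'b) \<Rightarrow> ('a \<Rightarrow> 'b) \<Rightarrow> 'a \<Rightarrow> 'b \<Rightarrow> 'b" where
  "Lbar f \<tau> \<eta> \<xi> x u = Lop f \<tau> x (proj (tan_sp f x) u) + inner u (\<eta> x) *\<^sub>R (Ytan f \<tau> \<eta> x + \<xi> x)"

definition covLbar :: "('a::real_normed_vector \<Rightarrow> 'b::real_inner) \<Rightarrow> ('a \<Rightarrow> 'b) \<Rightarrow> ('a \<Rightarrow> 'b) \<Rightarrow> ('a \<Rightarrow> 'b) \<Rightarrow> 'a \<Rightarrow> 'a \<Rightarrow> ('a \<Rightarrow> 'b) \<Rightarrow> 'b" where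
  "covLbar f \<tau> \<eta> \<xi> x X lam = D (\<lambda>z. Lbar f \<tau> \<eta> \<xi> z (lam z)) x X
      - Lbar f \<tau> \<eta> \<xi> x (proj (Wsp f \<eta> x) (D lam x X))"

definition phi :: "('a::real_normed_vector \<Rightarrow> 'b::real_inner) \<Rightarrow> ('a \<Rightarrow> 'b) \<Rightarrow> ('a \<Rightarrow> 'b) \<Rightarrow> ('a \<Rightarrow> 'b) \<Rightarrow> 'a \<Rightarrow> 'a \<Rightarrow> ('a \<Rightarrow> 'b) \<Rightarrow> 'b \<times> 'b" where
  "phi f \<tau> \<eta> \<xi> x X lam =
     (let a = proj (Rsp f \<eta> x) (D lam x X);
          b = proj (Rsp f \<eta> x) (covLbar f \<tau> \<eta> \<xi> x X lam)
      in (a + b, a - b))"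

definition iip :: "'b::real_inner \<times> 'b \<Rightarrow> 'b \<times> 'b \<Rightarrow> real" where
  "iip u v = inner (fst u) (fst v) - inner (snd u) (snd v)"

end

theory Submission
  imports Defs "HOL-Analysis.Analysis"
begin

lemma clairaut_est:
  fixes g :: "'a::real_normed_vector \<Rightarrow> 'b::real_inner" and g' :: "'a \<Rightarrow> 'a \<Rightarrow> 'b"
  assumes U: "open U" "x \<in> U"
    and gd: "\<And>z. z \<in> U \<Longrightarrow> (g has_derivative g' z) (at z)"
    and pd: "((\<lambda>z. g' z u) has_derivative P) (at x)"
    and e: "e > 0"
  shows "\<exists>d>0. \<forall>t. 0 < t \<and> t < d \<longrightarrow>
     norm (g (x + t *\<^sub>R u + t *\<^sub>R v) - g (x + t *\<^sub>R u) - g (x + t *\<^sub>R v) + g x - (t*t) *\<^sub>R P v) \<le> e * (t * t)"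
proof -
  define K where "K = 2 * norm u + norm v + 1"
  have K: "K > 0" unfolding K_def by (simp add: add_nonneg_pos)
  have blP: "bounded_linear P" using pd has_derivative_bounded_linear by blast
  obtain r where r: "r > 0" "ball x r \<subseteq> U" using U openE by blast
  from pd[unfolded has_derivative_at_alt] obtain d1 where d1: "d1 > 0"
    "\<And>y. norm (y - x) < d1 \<Longrightarrow> norm (g' y u - g' x u - P (y - x)) \<le> (e / K) * norm (y - x)"
    using e K by (metis divide_pos_pos)
  define d where "d = min d1 r / K"
  have d: "d > 0" unfolding d_def using d1 r K by simp
  have small: "norm (s *\<^sub>R u + t *\<^sub>R v) < min d1 r" "norm (s *\<^sub>R u) < min d1 r"
    if "0 \<le> s" "s \<le> t" "t < d" for s t
  proof -
    have "norm (s *\<^sub>R u + t *\<^sub>R v) \<le> norm (s *\<^sub>R u) + norm (t *\<^sub>R v)" by (rule norm_triangle_ineq)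
    also have "\<dots> = s * norm u + t * norm v" using that by simp
    also have "\<dots> \<le> t * K"
    proof -
      have "s * norm u \<le> t * norm u" using that by (simp add: mult_right_mono)
      moreover have "0 \<le> t * norm v" "0 \<le> t * norm u" using that by simp_all
      moreover have "t * K = 2 * (t * norm u) + t * norm v + t" by (simp add: K_def algebra_simps)
      ultimately show ?thesis using that by linarith
    qed
    also have "\<dots> < d * K" using that K by simp
    also have "\<dots> = min d1 r" unfolding d_def using K by simp
    finally show "norm (s *\<^sub>R u + t *\<^sub>R v) < min d1 r" .
    have "norm (s *\<^sub>R u) \<le> t * K"
    proof -
      have "s * norm u \<le> t * norm u" using that by (simp add: mult_right_mono)
      moreover have "0 \<le> t * norm v" "0 \<le> t * norm u" using that by simp_all
      moreover have "t * K = 2 * (t * norm u) + t * norm v + t" by (simp add: K_def algebra_simps)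
      moreover have "norm (s *\<^sub>R u) = s * norm u" using that by simp
      ultimately show ?thesis using that by linarith
    qed
    also have "\<dots> < d * K" using that K by simp
    also have "\<dots> = min d1 r" unfolding d_def using K by simp
    finally show "norm (s *\<^sub>R u) < min d1 r" .
  qed
  show ?thesis
  proof (intro exI[of _ d] conjI allI impI d)
    fix t assume t: "0 < t \<and> t < d"
    define k where "k = (\<lambda>s. g (x + s *\<^sub>R u + t *\<^sub>R v) - g (x + s *\<^sub>R u) - (s * t) *\<^sub>R P v)"
    define k' where "k' = (\<lambda>s h. h *\<^sub>R (g' (x + s *\<^sub>R u + t *\<^sub>R v) u - g' (x + s *\<^sub>R u) u - t *\<^sub>R P v))"
    have inU: "x + s *\<^sub>R u + t *\<^sub>R v \<in> U" "x + s *\<^sub>R u \<in> U" if "0 \<le> s" "s \<le> t" for s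
    proof -
      have a: "norm (s *\<^sub>R u + t *\<^sub>R v) < r" "norm (s *\<^sub>R u) < r" using small[OF that] t by auto
      have dd: "dist x (x + y) = norm y" for y by (simp add: dist_norm)
      show "x + s *\<^sub>R u + t *\<^sub>R v \<in> U" using a(1) r(2) dd[of "s *\<^sub>R u + t *\<^sub>R v"] by (auto simp: add.assoc)
      show "x + s *\<^sub>R u \<in> U" using a(2) r(2) dd[of "s *\<^sub>R u"] by auto
    qed
    have kd: "(k has_derivative k' s) (at s)" if "0 \<le> s" "s \<le> t" for s
    proof -
      have l1: "g' (x + s *\<^sub>R u + t *\<^sub>R v) (h *\<^sub>R u) = h *\<^sub>R g' (x + s *\<^sub>R u + t *\<^sub>R v) u" for h
        using gd[OF inU(1)[OF that]] has_derivative_bounded_linear linear_scale bounded_linear.linear by blast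
      have l2: "g' (x + s *\<^sub>R u) (h *\<^sub>R u) = h *\<^sub>R g' (x + s *\<^sub>R u) u" for h
        using gd[OF inU(2)[OF that]] has_derivative_bounded_linear linear_scale bounded_linear.linear by blast
      have A: "((\<lambda>s. g (x + s *\<^sub>R u + t *\<^sub>R v)) has_derivative (\<lambda>h. g' (x + s *\<^sub>R u + t *\<^sub>R v) (h *\<^sub>R u))) (at s)"
      proof -
        have "((\<lambda>s. x + s *\<^sub>R u + t *\<^sub>R v) has_derivative (\<lambda>h. h *\<^sub>R u)) (at s)"
          by (auto intro!: derivative_eq_intros)
        from has_derivative_compose[OF this gd[OF inU(1)[OF that]]] show ?thesis by (simp add: o_def)
      qed
      have B: "((\<lambda>s. g (x + s *\<^sub>R u)) has_derivative (\<lambda>h. g' (x + s *\<^sub>R u) (h *\<^sub>R u))) (at s)"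
      proof -
        have "((\<lambda>s. x + s *\<^sub>R u) has_derivative (\<lambda>h. h *\<^sub>R u)) (at s)"
          by (auto intro!: derivative_eq_intros)
        from has_derivative_compose[OF this gd[OF inU(2)[OF that]]] show ?thesis by (simp add: o_def)
      qed
      have C: "((\<lambda>s. (s * t) *\<^sub>R P v) has_derivative (\<lambda>h. (h * t) *\<^sub>R P v)) (at s)"
        by (auto intro!: derivative_eq_intros)
      have "(k has_derivative (\<lambda>h. g' (x + s *\<^sub>R u + t *\<^sub>R v) (h *\<^sub>R u) - g' (x + s *\<^sub>R u) (h *\<^sub>R u) - (h * t) *\<^sub>R P v)) (at s)"
        unfolding k_def by (intro has_derivative_diff A B C)
      moreover have "(\<lambda>h. g' (x + s *\<^sub>R u + t *\<^sub>R v) (h *\<^sub>R u) - g' (x + s *\<^sub>R u) (h *\<^sub>R u) - (h * t) *\<^sub>R P v) = k' s"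
        unfolding k'_def l1 l2 by (auto simp: algebra_simps fun_eq_iff)
      ultimately show ?thesis by simp
    qed
    have cont: "continuous_on {0..t} k"
    proof (rule continuous_at_imp_continuous_on, intro ballI)
      fix s assume "s \<in> {0..t}"
      then show "isCont k s" using kd[of s] has_derivative_continuous by auto
    qed
    obtain s where s: "s \<in> {0<..<t}" "norm (k t - k 0) \<le> norm (k' s (t - 0))"
      using mvt_general[OF _ cont, of k'] t kd by force
    have bnd: "norm (g' (x + s *\<^sub>R u + t *\<^sub>R v) u - g' (x + s *\<^sub>R u) u - t *\<^sub>R P v) \<le> (e / K) * (t * K)"
    proof -
      have s0: "0 \<le> s" "s \<le> t" using s by auto
      have n1: "norm (g' (x + (s *\<^sub>R u + t *\<^sub>R v)) u - g' x u - P (s *\<^sub>R u + t *\<^sub>R v)) \<le> (e / K) * norm (s *\<^sub>R u + t *\<^sub>R v)"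
        using d1(2)[of "x + (s *\<^sub>R u + t *\<^sub>R v)"] small[OF s0 ] t by simp
      have n2: "norm (g' (x + s *\<^sub>R u) u - g' x u - P (s *\<^sub>R u)) \<le> (e / K) * norm (s *\<^sub>R u)"
        using d1(2)[of "x + s *\<^sub>R u"] small[OF s0] t by simp
      have eq: "g' (x + s *\<^sub>R u + t *\<^sub>R v) u - g' (x + s *\<^sub>R u) u - t *\<^sub>R P v =
         (g' (x + (s *\<^sub>R u + t *\<^sub>R v)) u - g' x u - P (s *\<^sub>R u + t *\<^sub>R v)) - (g' (x + s *\<^sub>R u) u - g' x u - P (s *\<^sub>R u))"
        using blP bounded_linear.linear[OF blP] by (simp add: linear_add linear_scale add.assoc)
      have "norm (s *\<^sub>R u + t *\<^sub>R v) + norm (s *\<^sub>R u) \<le> t * K"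
      proof -
        have "norm (s *\<^sub>R u + t *\<^sub>R v) \<le> norm (s *\<^sub>R u) + norm (t *\<^sub>R v)" by (rule norm_triangle_ineq)
        also have "\<dots> = s * norm u + t * norm v" using s0 t by simp
        finally have "norm (s *\<^sub>R u + t *\<^sub>R v) \<le> s * norm u + t * norm v" .
        moreover have "norm (s *\<^sub>R u) = s * norm u" using s0 by simp
        moreover have "s * norm u \<le> t * norm u" using s0 by (simp add: mult_right_mono)
        moreover have "0 \<le> t * norm v" "0 \<le> t * norm u" using t by simp_all
        moreover have "t * K = 2 * (t * norm u) + t * norm v + t" by (simp add: K_def algebra_simps)
        ultimately show ?thesis using t by linarith
      qed
      then have "(e / K) * norm (s *\<^sub>R u + t *\<^sub>R v) + (e / K) * norm (s *\<^sub>R u) \<le> (e / K) * (t * K)"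
      proof -
        have "(e / K) * (norm (s *\<^sub>R u + t *\<^sub>R v) + norm (s *\<^sub>R u)) \<le> (e / K) * (t * K)"
          by (rule mult_left_mono) (use e K \<open>norm (s *\<^sub>R u + t *\<^sub>R v) + norm (s *\<^sub>R u) \<le> t * K\<close> in auto)
        then show ?thesis by (simp only: distrib_left)
      qed
      then show ?thesis unfolding eq using n1 n2 norm_triangle_ineq4 by (smt (verit))
    qed
    have "k t - k 0 = g (x + t *\<^sub>R u + t *\<^sub>R v) - g (x + t *\<^sub>R u) - g (x + t *\<^sub>R v) + g x - (t*t) *\<^sub>R P v"
      unfolding k_def by (simp add: algebra_simps)
    moreover have "norm (k' s (t - 0)) \<le> e * (t * t)"
    proof -
      have "norm (k' s (t - 0)) = t * norm (g' (x + s *\<^sub>R u + t *\<^sub>R v) u - g' (x + s *\<^sub>R u) u - t *\<^sub>R P v)"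
        unfolding k'_def using t by simp
      also have "\<dots> \<le> t * ((e / K) * (t * K))" using bnd t by (simp add: mult_left_mono)
      also have "\<dots> = e * (t * t)" using K by simp
      finally show ?thesis .
    qed
    ultimately show "norm (g (x + t *\<^sub>R u + t *\<^sub>R v) - g (x + t *\<^sub>R u) - g (x + t *\<^sub>R v) + g x - (t*t) *\<^sub>R P v) \<le> e * (t * t)"
      using s(2) by simp
  qed
qed

lemma clairaut:
  fixes g :: "'a::real_normed_vector \<Rightarrow> 'b::real_inner" and g' :: "'a \<Rightarrow> 'a \<Rightarrow> 'b"
  assumes U: "open U" "x \<in> U"
    and gd: "\<And>z. z \<in> U \<Longrightarrow> (g has_derivative g' z) (at z)"
    and pu: "((\<lambda>z. g' z u) has_derivative Pu) (at x)"
    and pv: "((\<lambda>z. g' z v) has_derivative Pv) (at x)"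
  shows "Pu v = Pv u"
proof (rule ccontr)
  assume ne: "Pu v \<noteq> Pv u"
  define e where "e = norm (Pu v - Pv u) / 4"
  have e: "e > 0" using ne unfolding e_def by simp
  obtain d1 where d1: "d1 > 0" "\<And>t. 0 < t \<and> t < d1 \<Longrightarrow>
     norm (g (x + t *\<^sub>R u + t *\<^sub>R v) - g (x + t *\<^sub>R u) - g (x + t *\<^sub>R v) + g x - (t*t) *\<^sub>R Pu v) \<le> e * (t * t)"
    using clairaut_est[OF U gd pu e, of v] by blast
  obtain d2 where d2: "d2 > 0" "\<And>t. 0 < t \<and> t < d2 \<Longrightarrow>
     norm (g (x + t *\<^sub>R v + t *\<^sub>R u) - g (x + t *\<^sub>R v) - g (x + t *\<^sub>R u) + g x - (t*t) *\<^sub>R Pv u) \<le> e * (t * t)"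
    using clairaut_est[OF U gd pv e, of u] by blast
  define t where "t = min d1 d2 / 2"
  have t: "0 < t" "t < d1" "t < d2" unfolding t_def using d1 d2 by auto
  define H where "H = g (x + t *\<^sub>R u + t *\<^sub>R v) - g (x + t *\<^sub>R u) - g (x + t *\<^sub>R v) + g x"
  have h1: "norm (H - (t*t) *\<^sub>R Pu v) \<le> e * (t * t)" using d1(2)[of t] t unfolding H_def by simp
  have h2: "norm (H - (t*t) *\<^sub>R Pv u) \<le> e * (t * t)" using d2(2)[of t] t unfolding H_def
    by (simp add: algebra_simps)
  have "(t*t) * norm (Pu v - Pv u) = norm ((H - (t*t) *\<^sub>R Pv u) - (H - (t*t) *\<^sub>R Pu v))"
    using t by (simp add: algebra_simps norm_minus_commute flip: scaleR_diff_right)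
  also have "\<dots> \<le> norm (H - (t*t) *\<^sub>R Pv u) + norm (H - (t*t) *\<^sub>R Pu v)" by (rule norm_triangle_ineq4)
  also have "\<dots> \<le> 2 * e * (t * t)" using h1 h2 by simp
  also have "\<dots> = (t*t) * norm (Pu v - Pv u) / 2" unfolding e_def by simp
  finally show False using t ne by simp
qed


definition gram :: "(real^'n \<Rightarrow> real^'m) \<Rightarrow> real^'n^'n" where
  "gram A = (\<chi> i j. inner (A (axis i 1)) (A (axis j 1)))"

definition sol :: "real^'n^'n \<Rightarrow> real^'n \<Rightarrow> real^'n" where
  "sol G r = (\<chi> k. det (\<chi> i j. if j = k then r$i else G$i$j) / det G)"

lemma lin_expand:
  assumes "linear (A :: real^'n \<Rightarrow> 'b::real_vector)"
  shows "A c = (\<Sum>j\<in>UNIV. c$j *\<^sub>R A (axis j 1))"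
proof -
  have "A c = A (\<Sum>j\<in>UNIV. c$j *\<^sub>R axis j 1)"
    using basis_expansion[of c] by (simp add: scalar_mult_eq_scaleR)
  also have "\<dots> = (\<Sum>j\<in>UNIV. c$j *\<^sub>R A (axis j 1))"
    using assms by (simp add: linear_sum linear_scale)
  finally show ?thesis .
qed

lemma gram_mult:
  assumes "linear (A :: real^'n \<Rightarrow> real^'m)"
  shows "(gram A *v c) $ i = inner (A (axis i 1)) (A c)"
  unfolding gram_def matrix_vector_mult_def lin_expand[OF assms, of c]
  by (simp add: inner_sum_right mult.commute)

lemma gram_det:
  assumes "linear (A :: real^'n \<Rightarrow> real^'m)" "inj A"
  shows "det (gram A) \<noteq> 0"
proof
  assume "det (gram A) = 0"
  then have "\<not> invertible (gram A)" by (simp add: invertible_det_nz)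
  then have "\<not> (\<forall>x. gram A *v x = 0 \<longrightarrow> x = 0)"
    by (simp add: invertible_left_inverse matrix_left_invertible_ker)
  then obtain c where c: "c \<noteq> 0" "gram A *v c = 0" by blast
  have "inner (A c) (A c) = (\<Sum>j\<in>UNIV. c$j * inner (A (axis j 1)) (A c))"
    by (subst (1) lin_expand[OF assms(1)]) (simp add: inner_sum_left)
  also have "\<dots> = (\<Sum>j\<in>UNIV. c$j * (gram A *v c) $ j)" by (simp add: gram_mult[OF assms(1)])
  also have "\<dots> = 0" using c by simp
  finally have "A c = 0" by simp
  then have "c = 0" using assms linear_0 by (metis injD)
  then show False using c by simp
qed

lemma gram_sol_eq:
  assumes "linear (A :: real^'n \<Rightarrow> real^'m)" "inj A"
  shows "gram A *v sol (gram A) r = r"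
  using cramer[OF gram_det[OF assms], of "sol (gram A) r" r] unfolding sol_def by simp

lemma gram_sol_inner:
  assumes "linear (A :: real^'n \<Rightarrow> real^'m)" "inj A"
  shows "inner (A (axis i 1)) (A (sol (gram A) r)) = r $ i"
  using gram_sol_eq[OF assms, of r] gram_mult[OF assms(1)] by metis

lemma gram_sol_range:
  assumes "linear (A :: real^'n \<Rightarrow> real^'m)" "inj A" "w \<in> range A"
  shows "A (sol (gram A) (\<chi> i. inner (A (axis i 1)) w)) = w"
proof -
  obtain c where w: "w = A c" using assms(3) by blast
  have "gram A *v c = (\<chi> i. inner (A (axis i 1)) w)"
    by (simp add: vec_eq_iff gram_mult[OF assms(1)] w)
  then have "c = sol (gram A) (\<chi> i. inner (A (axis i 1)) w)"
    using cramer[OF gram_det[OF assms(1,2)]] unfolding sol_def by blast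
  then show ?thesis using w by simp
qed

lemma prod_differentiable:
  fixes f :: "'i \<Rightarrow> 'a::real_normed_vector \<Rightarrow> real"
  assumes "\<And>i. i \<in> I \<Longrightarrow> f i differentiable (at x)"
  shows "(\<lambda>z. \<Prod>i\<in>I. f i z) differentiable (at x)"
proof -
  have "\<forall>i\<in>I. (f i has_derivative frechet_derivative (f i) (at x)) (at x)"
    using assms frechet_derivative_works by blast
  then have "((\<lambda>z. \<Prod>i\<in>I. f i z) has_derivative (\<lambda>y. \<Sum>i\<in>I. frechet_derivative (f i) (at x) y * (\<Prod>j\<in>I - {i}. f j x))) (at x)"
    by (intro has_derivative_prod) auto
  then show ?thesis unfolding differentiable_def by blast
qed

lemma det_differentiable:
  fixes M :: "'a::real_normed_vector \<Rightarrow> real^'n^'n"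
  assumes "\<And>i j. (\<lambda>z. M z $ i $ j) differentiable (at x)"
  shows "(\<lambda>z. det (M z)) differentiable (at x)"
  unfolding det_def
  by (intro differentiable_sum ballI differentiable_mult differentiable_const prod_differentiable assms)
     (simp add: finite_permutations)

lemma vec_differentiable:
  fixes F :: "'a::real_normed_vector \<Rightarrow> real^'n"
  assumes "\<And>k. (\<lambda>z. F z $ k) differentiable (at x)"
  shows "F differentiable (at x)"
proof -
  have "F z = (\<Sum>k\<in>UNIV. (F z $ k) *\<^sub>R axis k 1)" for z
    using basis_expansion[of "F z"] by (simp add: scalar_mult_eq_scaleR)
  then have "F = (\<lambda>z. \<Sum>k\<in>UNIV. (F z $ k) *\<^sub>R axis k 1)" by auto
  moreover have "(\<lambda>z. \<Sum>k\<in>UNIV. (F z $ k) *\<^sub>R (axis k 1 :: real^'n)) differentiable (at x)"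
    by (intro differentiable_sum ballI differentiable_scaleR assms differentiable_const) simp
  ultimately show ?thesis by simp
qed

lemma sol_differentiable:
  fixes G :: "'a::real_normed_vector \<Rightarrow> real^'n^'n" and r :: "'a \<Rightarrow> real^'n"
  assumes "\<And>i j. (\<lambda>z. G z $ i $ j) differentiable (at x)" "\<And>i. (\<lambda>z. r z $ i) differentiable (at x)"
    and "det (G x) \<noteq> 0"
  shows "(\<lambda>z. sol (G z) (r z)) differentiable (at x)"
proof (rule vec_differentiable)
  fix k
  have "(\<lambda>z. det (\<chi> i j. if j = k then r z $ i else G z $ i $ j)) differentiable (at x)"
  proof (rule det_differentiable)
    fix i j show "(\<lambda>z. (\<chi> i j. if j = k then r z $ i else G z $ i $ j) $ i $ j) differentiable (at x)"
      by (cases "j = k") (simp_all add: assms)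
  qed
  moreover have "(\<lambda>z. det (G z)) differentiable (at x)" by (rule det_differentiable) (simp add: assms)
  ultimately show "(\<lambda>z. sol (G z) (r z) $ k) differentiable (at x)"
    unfolding sol_def using assms(3) by (simp add: differentiable_divide)
qed


lemma smooth_hasD:
  assumes "smooth_on U g" "open U" "z \<in> U"
  shows "(g has_derivative D g z) (at z)"
proof -
  from assms(1) have "g differentiable_on U" by (cases rule: smooth_on.cases) auto
  then have "g differentiable (at z)" using assms differentiable_on_eq_differentiable_at by blast
  then show ?thesis unfolding D_def using frechet_derivative_works by blast
qed

lemma smooth_D: "smooth_on U g \<Longrightarrow> smooth_on U (\<lambda>z. D g z v)"
  by (erule smooth_on.cases) (simp add: D_def)

lemma D_eq:
  assumes "(g has_derivative g') (at x)" shows "D g x = g'"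
  unfolding D_def using frechet_derivative_at[OF assms] by simp

lemma D_transform:
  assumes "open U" "x \<in> U" "\<And>z. z \<in> U \<Longrightarrow> g z = h z" "(h has_derivative h') (at x)"
  shows "D g x = h'" "(g has_derivative h') (at x)"
proof -
  show "(g has_derivative h') (at x)"
    using has_derivative_transform_within_open[OF assms(4,1,2)] assms(3) by metis
  then show "D g x = h'" by (rule D_eq)
qed

lemma deriv_zero:
  assumes "open U" "x \<in> U" "(g has_derivative g') (at x)" "\<And>z. z \<in> U \<Longrightarrow> g z = c"
  shows "g' h = 0"
proof -
  have h0: "((\<lambda>z. c) has_derivative (\<lambda>_. 0)) (at x)" by simp
  have "(g has_derivative (\<lambda>_. 0)) (at x)"
  proof (rule has_derivative_transform_within_open[OF h0 assms(1,2)])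
    fix z assume "z \<in> U" then show "c = g z" using assms(4) by simp
  qed
  then have "g' = (\<lambda>_. 0)" using has_derivative_unique assms(3) by blast
  then show ?thesis by simp
qed

lemma deriv_apply:
  fixes M :: "'a::real_normed_vector \<Rightarrow> real^'n \<Rightarrow> 'b::real_normed_vector"
  assumes U: "open U" "x \<in> U" and lin: "\<And>z. z \<in> U \<Longrightarrow> linear (M z)"
    and Mj: "\<And>j. ((\<lambda>z. M z (axis j 1)) has_derivative Mj j) (at x)"
    and c: "(c has_derivative c') (at x)"
  shows "((\<lambda>z. M z (c z)) has_derivative (\<lambda>h. M x (c' h) + (\<Sum>j\<in>UNIV. (c x $ j) *\<^sub>R Mj j h))) (at x)"
proof -
  have cj: "((\<lambda>z. c z $ j) has_derivative (\<lambda>h. c' h $ j)) (at x)" for j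
    using bounded_linear.has_derivative[OF bounded_linear_vec_nth c] .
  have "((\<lambda>z. \<Sum>j\<in>UNIV. (c z $ j) *\<^sub>R M z (axis j 1)) has_derivative
     (\<lambda>h. \<Sum>j\<in>UNIV. (c x $ j) *\<^sub>R Mj j h + (c' h $ j) *\<^sub>R M x (axis j 1))) (at x)"
    by (rule has_derivative_sum, rule has_derivative_scaleR, rule cj, rule Mj)
  moreover have "(\<lambda>h. \<Sum>j\<in>UNIV. (c x $ j) *\<^sub>R Mj j h + (c' h $ j) *\<^sub>R M x (axis j 1))
      = (\<lambda>h. M x (c' h) + (\<Sum>j\<in>UNIV. (c x $ j) *\<^sub>R Mj j h))"
  proof
    fix h show "(\<Sum>j\<in>UNIV. (c x $ j) *\<^sub>R Mj j h + (c' h $ j) *\<^sub>R M x (axis j 1))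
      = M x (c' h) + (\<Sum>j\<in>UNIV. (c x $ j) *\<^sub>R Mj j h)"
      unfolding lin_expand[OF lin[OF U(2)], of "c' h"] by (simp add: sum.distrib)
  qed
  ultimately have H: "((\<lambda>z. \<Sum>j\<in>UNIV. (c z $ j) *\<^sub>R M z (axis j 1)) has_derivative
     (\<lambda>h. M x (c' h) + (\<Sum>j\<in>UNIV. (c x $ j) *\<^sub>R Mj j h))) (at x)" by simp
  show ?thesis
  proof (rule D_transform(2)[OF U _ H])
    fix z assume "z \<in> U"
    then show "M z (c z) = (\<Sum>j\<in>UNIV. (c z $ j) *\<^sub>R M z (axis j 1))"
      by (rule lin_expand[OF lin])
  qed
qed

lemma D_lin2:
  fixes M :: "'a::real_normed_vector \<Rightarrow> real^'n \<Rightarrow> 'b::real_normed_vector"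
  assumes U: "open U" "x \<in> U" and lin: "\<And>z. z \<in> U \<Longrightarrow> linear (M z)"
    and Mj: "\<And>j. ((\<lambda>z. M z (axis j 1)) has_derivative Mj j) (at x)"
  shows "D (\<lambda>z. M z v) x h = (\<Sum>j\<in>UNIV. (v $ j) *\<^sub>R Mj j h)"
proof -
  have "((\<lambda>z. M z ((\<lambda>_. v) z)) has_derivative (\<lambda>h. M x ((\<lambda>_. 0) h) + (\<Sum>j\<in>UNIV. (v $ j) *\<^sub>R Mj j h))) (at x)"
    by (rule deriv_apply[OF U lin Mj]) simp_all
  then have "D (\<lambda>z. M z v) x = (\<lambda>h. M x 0 + (\<Sum>j\<in>UNIV. (v $ j) *\<^sub>R Mj j h))" by (rule D_eq)
  then show ?thesis using linear_0[OF lin[OF U(2)]] by simp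
qed

lemma proj_unique:
  fixes S :: "'a::real_inner set"
  assumes "subspace S" "q \<in> S" "\<forall>w\<in>S. inner (v - q) w = 0"
  shows "proj S v = q"
  unfolding proj_def
proof (rule the_equality)
  show "q \<in> S \<and> (\<forall>w\<in>S. inner (v - q) w = 0)" using assms by simp
  fix q' assume q': "q' \<in> S \<and> (\<forall>w\<in>S. inner (v - q') w = 0)"
  have d: "q - q' \<in> S" using assms(1,2) q' subspace_diff by blast
  have "inner (q - q') (q - q') = inner (v - q') (q - q') - inner (v - q) (q - q')"
    by (simp add: inner_diff_left)
  also have "\<dots> = 0" using q' assms(3) d by simp
  finally show "q' = q" by simp
qed

lemma proj_prop:
  fixes S :: "'a::euclidean_space set"
  assumes "subspace S"
  shows "proj S v \<in> S" "\<And>w. w \<in> S \<Longrightarrow> inner (v - proj S v) w = 0"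
proof -
  obtain y z where yz: "y \<in> span S" "\<And>w. w \<in> span S \<Longrightarrow> orthogonal z w" "v = y + z"
    using orthogonal_subspace_decomp_exists by blast
  have sp: "span S = S" using assms by (simp add: span_eq_iff)
  have "proj S v = y" using proj_unique[OF assms, of y v] yz sp by (simp add: orthogonal_def)
  then show "proj S v \<in> S" "\<And>w. w \<in> S \<Longrightarrow> inner (v - proj S v) w = 0"
    using yz sp by (auto simp: orthogonal_def)
qed


lemma alg_Q:
  fixes fA tA :: "'a::real_inner \<Rightarrow> 'b::real_inner" and fB tB :: "'a \<Rightarrow> 'a \<Rightarrow> 'b"
    and T t :: "'b \<Rightarrow> 'b" and \<eta> \<xi> y :: 'b and eA zA :: "'a \<Rightarrow> 'b"
  assumes lin: "linear fA" "linear tA" "linear T"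
  and Tself: "\<And>u v. inner (T u) v = inner u (T v)"
  and Trange: "\<And>u. \<exists>V. T u = fA V"
  and Tf1: "\<And>V. T (fA V) = fA V"
  and tdef: "\<And>u V. T u = fA V \<Longrightarrow> t u = tA V"
  and bend: "\<And>U V. inner (fA U) (tA V) + inner (fA V) (tA U) = 0"
  and eta: "\<And>V. inner \<eta> (fA V) = 0" "inner \<eta> \<eta> = 1" "\<And>Y. inner (eA Y) \<eta> = 0"
  and xi: "\<And>V. inner \<xi> (fA V) = 0" "inner \<xi> \<eta> = 0"
  and yy: "T y = y" "\<And>V. inner y (fA V) + inner (tA V) \<eta> = 0"
  and E0: "\<And>Z X V. inner (fB Z X) (tA V) + inner (tB Z X) (fA V) = 0"
  and F6: "\<And>X Z. inner (tB X Z) \<eta> + inner (fB X Z) (y + \<xi>) = 0"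
  and F8: "\<And>Y. inner (zA Y) \<eta> + inner (y + \<xi>) (eA Y) = 0"
  and F9: "\<And>Y V. inner (zA Y) (fA V) + inner (y+\<xi>) (fB Y V) + inner (tB Y V) \<eta> + inner (tA V) (eA Y) = 0"
  and Ndef: "N = (\<lambda>v. v - T v - inner v \<eta> *\<^sub>R \<eta>)"
  and bTdef: "bT = (\<lambda>X Z. tB X Z - t (fB X Z) - inner (fB X Z) \<eta> *\<^sub>R (y + \<xi>))"
  and bEdef: "bE = (\<lambda>X. zA X - t (eA X) - inner (eA X) \<eta> *\<^sub>R (y + \<xi>))"
  shows "inner (N (fB X Z)) (N (bT Y W)) + inner (N (bT X Z)) (N (fB Y W))
          = inner (fB X Z) (tB Y W) + inner (tB X Z) (fB Y W)"
    and "inner (N (fB X Z)) (N (bE Y)) + inner (N (bT X Z)) (N (eA Y))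
          = inner (fB X Z) (zA Y) + inner (tB X Z) (eA Y)"
proof -
  have TT: "T (T u) = T u" for u using Trange[of u] Tf1 by metis
  have Teta: "T \<eta> = 0"
  proof -
    obtain V where V: "T \<eta> = fA V" using Trange by blast
    have "inner (T \<eta>) (T \<eta>) = inner \<eta> (T (T \<eta>))" by (rule Tself)
    also have "\<dots> = 0" using V Tf1 eta(1) by simp
    finally show ?thesis by simp
  qed
  have Txi: "T \<xi> = 0"
  proof -
    obtain V where V: "T \<xi> = fA V" using Trange by blast
    have "inner (T \<xi>) (T \<xi>) = inner \<xi> (T (T \<xi>))" by (rule Tself)
    also have "\<dots> = 0" using V Tf1 xi(1) by simp
    finally show ?thesis by simp
  qed
  have yeta: "inner y \<eta> = 0" using yy(1) Tself[of y \<eta>] Teta by simp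
  have Nself: "inner (N u) (N v) = inner u (N v)" for u v
  proof -
    have "inner (T u) (N v) = 0" unfolding Ndef
      using Tself[of u "v - T v - inner v \<eta> *\<^sub>R \<eta>"] lin(3) TT Teta
      by (simp add: linear_diff linear_scale inner_diff_right)
    moreover have "inner \<eta> (N v) = 0" unfolding Ndef
      using Tself[of \<eta> v] Teta eta(2) by (simp add: inner_diff_right inner_commute)
    ultimately show ?thesis unfolding Ndef[of] by (simp add: inner_diff_left Ndef[symmetric])
  qed
  have Nsym: "inner u (N v) = inner (N u) v" for u v
    unfolding Ndef using Tself[of u v] by (simp add: inner_diff_right inner_diff_left inner_commute)
  have Nf1: "N (fA V) = 0" for V unfolding Ndef using Tf1 eta(1) by (simp add: inner_commute)
  have Neta: "N \<eta> = 0" unfolding Ndef using Teta eta(2) by simp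
  have Ny: "N y = 0" unfolding Ndef using yy(1) yeta by simp
  have Nxi: "N \<xi> = \<xi>" unfolding Ndef using Txi xi(2) by simp
  have teta: "inner (t u) \<eta> = - inner y u" for u
  proof -
    obtain V where V: "T u = fA V" using Trange by blast
    have "inner (t u) \<eta> = inner (tA V) \<eta>" using tdef[OF V] by simp
    also have "\<dots> = - inner y (fA V)" using yy(2)[of V] by simp
    also have "\<dots> = - inner y u" using V yy(1) Tself[of y u] by simp
    finally show ?thesis .
  qed
  show "inner (N (fB X Z)) (N (bT Y W)) + inner (N (bT X Z)) (N (fB Y W))
          = inner (fB X Z) (tB Y W) + inner (tB X Z) (fB Y W)"
  proof -
    define u v where "u = fB X Z" and "v = fB Y W"
    obtain V1 where V1: "T u = fA V1" using Trange by blast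
    obtain V2 where V2: "T v = fA V2" using Trange by blast
    have t1: "t u = tA V1" and t2: "t v = tA V2" using tdef V1 V2 by auto
    have "inner (N u) (N (bT Y W)) = inner (N u) (bT Y W)" using Nself Nsym by metis
    also have "\<dots> = inner (u - fA V1 - inner u \<eta> *\<^sub>R \<eta>) (tB Y W - tA V2 - inner v \<eta> *\<^sub>R (y + \<xi>))"
      unfolding Ndef bTdef using V1 t2 u_def v_def by simp
    finally have A: "inner (N u) (N (bT Y W)) = inner u (tB Y W) - inner u (tA V2) - inner v \<eta> * inner u (y + \<xi>)
       - inner (fA V1) (tB Y W) + inner (fA V1) (tA V2) + inner v \<eta> * inner (fA V1) (y + \<xi>)
       - inner u \<eta> * inner \<eta> (tB Y W) + inner u \<eta> * inner \<eta> (tA V2) + inner u \<eta> * inner v \<eta> * inner \<eta> (y + \<xi>)"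
      by (simp add: inner_diff_left inner_diff_right algebra_simps)
    have "inner (N (bT X Z)) (N v) = inner (bT X Z) (N v)" using Nself Nsym by metis
    also have "\<dots> = inner (tB X Z - tA V1 - inner u \<eta> *\<^sub>R (y + \<xi>)) (v - fA V2 - inner v \<eta> *\<^sub>R \<eta>)"
      unfolding Ndef bTdef using V2 t1 u_def v_def by simp
    finally have B: "inner (N (bT X Z)) (N v) = inner v (tB X Z) - inner v (tA V1) - inner u \<eta> * inner v (y + \<xi>)
       - inner (fA V2) (tB X Z) + inner (fA V2) (tA V1) + inner u \<eta> * inner (fA V2) (y + \<xi>)
       - inner v \<eta> * inner \<eta> (tB X Z) + inner v \<eta> * inner \<eta> (tA V1) + inner v \<eta> * inner u \<eta> * inner \<eta> (y + \<xi>)"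
      by (simp add: inner_diff_left inner_diff_right algebra_simps inner_commute)
    have c1: "inner (fA V1) (tB Y W) = - inner v (tA V1)" using E0[of Y W V1] u_def v_def by (simp add: inner_commute)
    have c2: "inner (fA V2) (tB X Z) = - inner u (tA V2)" using E0[of X Z V2] u_def v_def by (simp add: inner_commute)
    have c3: "inner (fA V1) (tA V2) + inner (fA V2) (tA V1) = 0" by (rule bend)
    have c4: "inner u (y + \<xi>) = - inner (tB X Z) \<eta>" using F6[of X Z] u_def v_def by simp
    have c5: "inner v (y + \<xi>) = - inner (tB Y W) \<eta>" using F6[of Y W] u_def v_def by simp
    have c6: "inner (fA V1) (y + \<xi>) = - inner (tA V1) \<eta>" using yy(2)[of V1] xi(1)[of V1]
      by (simp add: inner_add_right inner_commute)
    have c7: "inner (fA V2) (y + \<xi>) = - inner (tA V2) \<eta>" using yy(2)[of V2] xi(1)[of V2]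
      by (simp add: inner_add_right inner_commute)
    have c8: "inner \<eta> (y + \<xi>) = 0" using yeta xi(2) by (simp add: inner_add_right inner_commute)
    have z1: "inner \<eta> \<xi> = 0" "inner \<eta> y = 0" using yeta xi(2) by (auto simp: inner_commute)
    have m: "inner v \<eta> * inner u (y + \<xi>) = - inner v \<eta> * inner (tB X Z) \<eta>"
      "inner u \<eta> * inner v (y + \<xi>) = - inner u \<eta> * inner (tB Y W) \<eta>"
      "inner v \<eta> * inner (fA V1) (y + \<xi>) = - inner v \<eta> * inner (tA V1) \<eta>"
      "inner u \<eta> * inner (fA V2) (y + \<xi>) = - inner u \<eta> * inner (tA V2) \<eta>"
      using c4 c5 c6 c7 by simp_all
    show ?thesis unfolding u_def[symmetric] v_def[symmetric] using A B c1 c2 c3 m c8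
      by (simp add: inner_commute algebra_simps z1 inner_add_right inner_add_left; linarith?)
  qed
  show "inner (N (fB X Z)) (N (bE Y)) + inner (N (bT X Z)) (N (eA Y))
          = inner (fB X Z) (zA Y) + inner (tB X Z) (eA Y)"
  proof -
    define u e where "u = fB X Z" and "e = eA Y"
    obtain V1 where V1: "T u = fA V1" using Trange by blast
    obtain V3 where V3: "T e = fA V3" using Trange by blast
    have t1: "t u = tA V1" and t3: "t e = tA V3" using tdef V1 V3 by auto
    have e0: "inner e \<eta> = 0" using eta(3) u_def e_def by simp
    have "inner (N u) (N (bE Y)) = inner (N u) (bE Y)" using Nself Nsym by metis
    also have "\<dots> = inner (u - fA V1 - inner u \<eta> *\<^sub>R \<eta>) (zA Y - tA V3)"
      unfolding Ndef bEdef using V1 t3 u_def e_def e0 by simp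
    finally have A: "inner (N u) (N (bE Y)) = inner u (zA Y) - inner u (tA V3) - inner (fA V1) (zA Y)
        + inner (fA V1) (tA V3) - inner u \<eta> * inner \<eta> (zA Y) + inner u \<eta> * inner \<eta> (tA V3)"
      by (simp add: inner_diff_left inner_diff_right algebra_simps)
    have "inner (N (bT X Z)) (N e) = inner (bT X Z) (N e)" using Nself Nsym by metis
    also have "\<dots> = inner (tB X Z - tA V1 - inner u \<eta> *\<^sub>R (y + \<xi>)) (e - fA V3)"
      unfolding Ndef bTdef using V3 t1 u_def e_def e0 by simp
    finally have B: "inner (N (bT X Z)) (N e) = inner (tB X Z) e - inner (tB X Z) (fA V3) - inner (tA V1) e
        + inner (tA V1) (fA V3) - inner u \<eta> * inner (y + \<xi>) e + inner u \<eta> * inner (y + \<xi>) (fA V3)"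
      by (simp add: inner_diff_left inner_diff_right algebra_simps)
    have c1: "inner (fA V1) (tA V3) + inner (fA V3) (tA V1) = 0" by (rule bend)
    have c2: "inner (tB X Z) (fA V3) = - inner u (tA V3)" using E0[of X Z V3] u_def e_def by simp
    have c3: "inner \<eta> (zA Y) = - inner (y + \<xi>) e" using F8[of Y] u_def e_def by (simp add: inner_commute)
    have c4: "inner \<eta> (tA V3) = - inner y (fA V3)" using yy(2)[of V3] by (simp add: inner_commute)
    have c5: "inner (y + \<xi>) (fA V3) = inner y (fA V3)" using xi(1)[of V3] by (simp add: inner_add_left)
    have c6: "inner (zA Y) (fA V1) + inner (tA V1) e = 0"
      using F9[of Y V1] F6[of Y V1] u_def e_def by (simp add: inner_commute)
    have m: "inner u \<eta> * inner \<eta> (zA Y) = - inner u \<eta> * inner (y + \<xi>) e"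
       "inner u \<eta> * inner \<eta> (tA V3) = - inner u \<eta> * inner y (fA V3)"
       "inner u \<eta> * inner (y + \<xi>) (fA V3) = inner u \<eta> * inner y (fA V3)"
      using c3 c4 c5 by simp_all
    show ?thesis unfolding u_def[symmetric] e_def[symmetric] using A B c1 c2 m c6 xi(1)[of V3]
      by (simp add: inner_commute algebra_simps inner_add_right inner_add_left; linarith?)
  qed
qed


definition D2 :: "('a::real_normed_vector \<Rightarrow> 'b::real_normed_vector) \<Rightarrow> 'a \<Rightarrow> 'a \<Rightarrow> 'a \<Rightarrow> 'b" where
  "D2 g z X Y = D (\<lambda>w. D g w Y) z X"
definition D3 :: "('a::real_normed_vector \<Rightarrow> 'b::real_normed_vector) \<Rightarrow> 'a \<Rightarrow> 'a \<Rightarrow> 'a \<Rightarrow> 'a \<Rightarrow> 'b" where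
  "D3 g z Y X Z = D (\<lambda>w. D2 g w X Z) z Y"

lemma linD: "smooth_on U g \<Longrightarrow> open U \<Longrightarrow> z \<in> U \<Longrightarrow> linear (D g z)"
  using smooth_hasD has_derivative_linear by blast

lemma hasD2:
  assumes "smooth_on U g" "open U" "z \<in> U"
  shows "((\<lambda>w. D g w Y) has_derivative (\<lambda>X. D2 g z X Y)) (at z)"
  using smooth_hasD[OF smooth_D[OF assms(1)] assms(2,3)] unfolding D2_def by simp

lemma hasD3:
  assumes "smooth_on U g" "open U" "z \<in> U"
  shows "((\<lambda>w. D2 g w X Z) has_derivative (\<lambda>Y. D3 g z Y X Z)) (at z)"
  using smooth_hasD[OF smooth_D[OF smooth_D[OF assms(1)]] assms(2,3)] unfolding D3_def D2_def by simp

lemma D2_sym: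
  assumes g: "smooth_on (U::'a::euclidean_space set) (g::'a \<Rightarrow> 'b::real_inner)" and U: "open U" "z \<in> U"
  shows "D2 g z X Y = D2 g z Y X"
proof -
  have "D (\<lambda>w. D g w X) z Y = D (\<lambda>w. D g w Y) z X"
    by (rule clairaut[OF U smooth_hasD[OF g U(1)] smooth_hasD[OF smooth_D[OF g] U] smooth_hasD[OF smooth_D[OF g] U]])
  then show ?thesis unfolding D2_def by simp
qed

lemma D3_sym:
  assumes g: "smooth_on (U::'a::euclidean_space set) (g::'a \<Rightarrow> 'b::real_inner)" and U: "open U" "z \<in> U"
  shows "D3 g z Y X Z = D3 g z X Y Z"
proof -
  have h: "smooth_on U (\<lambda>w. D g w Z)" by (rule smooth_D[OF g])
  have "D (\<lambda>w. D (\<lambda>w. D g w Z) w X) z Y = D (\<lambda>w. D (\<lambda>w. D g w Z) w Y) z X"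
    by (rule clairaut[OF U smooth_hasD[OF h U(1)] smooth_hasD[OF smooth_D[OF h] U] smooth_hasD[OF smooth_D[OF h] U]])
  then show ?thesis unfolding D3_def D2_def by simp
qed

lemma D2_lin':
  assumes g: "smooth_on U (g :: real^'n \<Rightarrow> 'b::real_normed_vector)" and U: "open U" "z \<in> U"
  shows "D2 g z X v = (\<Sum>j\<in>UNIV. (v $ j) *\<^sub>R D2 g z X (axis j 1))"
  unfolding D2_def[of g z X v]
  by (rule D_lin2[OF U linD[OF g U(1)] hasD2[OF g U]])

lemma deriv_inner_const:
  fixes g h :: "'a::real_normed_vector \<Rightarrow> 'b::real_inner"
  assumes "open U" "x \<in> U" "(g has_derivative g') (at x)" "(h has_derivative h') (at x)"
    "\<And>z. z \<in> U \<Longrightarrow> inner (g z) (h z) = c"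
  shows "inner (g' Y) (h x) + inner (g x) (h' Y) = 0"
  using deriv_zero[OF assms(1,2) has_derivative_inner[OF assms(3,4)] assms(5)] by (simp add: add.commute)

lemma deriv_inner2_const:
  fixes g h k l :: "'a::real_normed_vector \<Rightarrow> 'b::real_inner"
  assumes "open U" "x \<in> U" "(g has_derivative g') (at x)" "(h has_derivative h') (at x)"
    "(k has_derivative k') (at x)" "(l has_derivative l') (at x)"
    "\<And>z. z \<in> U \<Longrightarrow> inner (g z) (h z) + inner (k z) (l z) = c"
  shows "inner (g' Y) (h x) + inner (g x) (h' Y) + inner (k' Y) (l x) + inner (k x) (l' Y) = 0"
  using deriv_zero[OF assms(1,2) has_derivative_add[OF has_derivative_inner[OF assms(3,4)] has_derivative_inner[OF assms(5,6)]] assms(7)]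
  by (simp add: algebra_simps)


locale bset =
  fixes U :: "(real^'n) set" and f \<tau> \<eta> \<xi> :: "real^'n \<Rightarrow> real^'m"
  assumes U: "open U" and imm: "immersion_on U f" and ib: "infinitesimal_bending U f \<tau>"
    and cs: "cond_star U f \<tau> \<eta> \<xi>"
begin

lemma smf: "smooth_on U f" using imm unfolding immersion_on_def by blast
lemma smt: "smooth_on U \<tau>" using ib unfolding infinitesimal_bending_def by blast
lemma sme: "smooth_on U \<eta>" using cs unfolding cond_star_def by blast
lemma smx: "smooth_on U \<xi>" using cs unfolding cond_star_def by blast
lemma injA: "z \<in> U \<Longrightarrow> inj (D f z)" using imm unfolding immersion_on_def by blast
lemma linA: "z \<in> U \<Longrightarrow> linear (D f z)" using linD[OF smf U] .
lemma linT: "z \<in> U \<Longrightarrow> linear (D \<tau> z)" using linD[OF smt U] .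
lemma bend0: "z \<in> U \<Longrightarrow> inner (D f z X) (D \<tau> z X) = 0" using ib unfolding infinitesimal_bending_def by blast
lemma cs_pt: assumes "z \<in> U"
  shows "\<eta> z \<in> nor_sp f z" "norm (\<eta> z) = 1" "\<xi> z \<in> Rsp f \<eta> z"
    "inner (beta f \<tau> z X Y) (\<eta> z) + inner (sff f z X Y) (\<xi> z) = 0"
  using cs assms unfolding cond_star_def by blast+

abbreviation T :: "real^'n \<Rightarrow> real^'m \<Rightarrow> real^'m" where "T z \<equiv> proj (tan_sp f z)"

lemma sub_tan: "z \<in> U \<Longrightarrow> subspace (tan_sp f z)"
  unfolding tan_sp_def by (rule linear_subspace_image[OF linA subspace_UNIV])

lemma T_range: "z \<in> U \<Longrightarrow> \<exists>V. T z v = D f z V"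
  using proj_prop(1)[OF sub_tan] unfolding tan_sp_def by blast

lemma T_orth: "z \<in> U \<Longrightarrow> inner (v - T z v) (D f z X) = 0"
  using proj_prop(2)[OF sub_tan] unfolding tan_sp_def by blast

lemma T_f1: "z \<in> U \<Longrightarrow> T z (D f z V) = D f z V"
  by (rule proj_unique[OF sub_tan]) (auto simp: tan_sp_def)

lemma T_self: assumes z: "z \<in> U" shows "inner (T z u) v = inner u (T z v)"
proof -
  obtain V1 where V1: "T z u = D f z V1" using T_range[OF z] by blast
  obtain V2 where V2: "T z v = D f z V2" using T_range[OF z] by blast
  have "inner (T z u) v = inner (T z u) (T z v) + inner (v - T z v) (T z u)"
    by (simp add: inner_diff_left inner_diff_right inner_commute)
  also have "\<dots> = inner (T z u) (T z v)" using T_orth[OF z, of v V1] V1 by simp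
  also have "\<dots> = inner u (T z v) - inner (u - T z u) (T z v)" by (simp add: inner_diff_left)
  also have "\<dots> = inner u (T z v)" using T_orth[OF z, of u V2] V2 by simp
  finally show ?thesis .
qed

lemma T_lin: assumes z: "z \<in> U" shows "linear (T z)"
proof (rule linearI)
  fix u v
  show "T z (u + v) = T z u + T z v"
  proof (rule proj_unique[OF sub_tan[OF z]])
    show "T z u + T z v \<in> tan_sp f z"
      using proj_prop(1)[OF sub_tan[OF z]] subspace_add[OF sub_tan[OF z]] by blast
    show "\<forall>w\<in>tan_sp f z. inner (u + v - (T z u + T z v)) w = 0"
      using T_orth[OF z] unfolding tan_sp_def
      by (auto simp: inner_diff_left inner_add_left algebra_simps)
  qed
next
  fix c u
  show "T z (c *\<^sub>R u) = c *\<^sub>R T z u"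
  proof (rule proj_unique[OF sub_tan[OF z]])
    show "c *\<^sub>R T z u \<in> tan_sp f z"
      using proj_prop(1)[OF sub_tan[OF z]] subspace_scale[OF sub_tan[OF z]] by blast
    have "inner (c *\<^sub>R u - c *\<^sub>R T z u) w = c * inner (u - T z u) w" for w
      by (simp add: inner_diff_left algebra_simps)
    then show "\<forall>w\<in>tan_sp f z. inner (c *\<^sub>R u - c *\<^sub>R T z u) w = 0"
      using T_orth[OF z] unfolding tan_sp_def by auto
  qed
qed

lemma T_zero: assumes z: "z \<in> U" and v: "\<And>X. inner v (D f z X) = 0" shows "T z v = 0"
proof (rule proj_unique[OF sub_tan[OF z]])
  show "0 \<in> tan_sp f z" using subspace_0[OF sub_tan[OF z]] .
  show "\<forall>w\<in>tan_sp f z. inner (v - 0) w = 0" using v unfolding tan_sp_def by auto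
qed

lemma eta_nor: "z \<in> U \<Longrightarrow> inner (\<eta> z) (D f z X) = 0"
  using cs_pt(1) unfolding nor_sp_def tan_sp_def by blast
lemma xi_nor: "z \<in> U \<Longrightarrow> inner (\<xi> z) (D f z X) = 0"
  using cs_pt(3) unfolding Rsp_def nor_sp_def tan_sp_def by blast
lemma xi_eta: "z \<in> U \<Longrightarrow> inner (\<xi> z) (\<eta> z) = 0"
  using cs_pt(3) unfolding Rsp_def by blast
lemma eta_eta: "z \<in> U \<Longrightarrow> inner (\<eta> z) (\<eta> z) = 1"
  using cs_pt(2) by (simp add: power2_norm_eq_inner[symmetric])
lemma T_eta: "z \<in> U \<Longrightarrow> T z (\<eta> z) = 0" using T_zero eta_nor by blast
lemma T_xi: "z \<in> U \<Longrightarrow> T z (\<xi> z) = 0" using T_zero xi_nor by blast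

lemma sub_nor: "subspace (nor_sp f z)"
  unfolding subspace_def nor_sp_def by (auto simp: inner_add_left)

lemma nor_tan: assumes z: "z \<in> U" and w: "w \<in> nor_sp f z" shows "inner (T z v) w = 0"
proof -
  obtain V where V: "T z v = D f z V" using T_range[OF z] by blast
  have "inner w (D f z V) = 0" using w unfolding nor_sp_def tan_sp_def by blast
  then show ?thesis using V by (simp add: inner_commute)
qed

lemma proj_nor: assumes z: "z \<in> U" shows "proj (nor_sp f z) v = v - T z v"
proof (rule proj_unique[OF sub_nor])
  show "v - T z v \<in> nor_sp f z" using T_orth[OF z] unfolding nor_sp_def tan_sp_def by auto
  show "\<forall>w\<in>nor_sp f z. inner (v - (v - T z v)) w = 0" using nor_tan[OF z] by simp
qed

lemma sub_R: "subspace (Rsp f \<eta> z)"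
  unfolding subspace_def Rsp_def nor_sp_def by (auto simp: inner_add_left)

lemma proj_R: assumes z: "z \<in> U" shows "proj (Rsp f \<eta> z) v = v - T z v - inner v (\<eta> z) *\<^sub>R \<eta> z"
proof (rule proj_unique[OF sub_R])
  have "inner (T z v) (\<eta> z) = 0" using nor_tan[OF z cs_pt(1)[OF z]] .
  then show "v - T z v - inner v (\<eta> z) *\<^sub>R \<eta> z \<in> Rsp f \<eta> z"
    using T_orth[OF z] eta_nor[OF z] eta_eta[OF z] unfolding Rsp_def nor_sp_def tan_sp_def
    by (auto simp: inner_diff_left)
  show "\<forall>w\<in>Rsp f \<eta> z. inner (v - (v - T z v - inner v (\<eta> z) *\<^sub>R \<eta> z)) w = 0"
  proof
    fix w assume w: "w \<in> Rsp f \<eta> z"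
    then have "inner (T z v) w = 0" "inner (\<eta> z) w = 0" using nor_tan[OF z] unfolding Rsp_def
      by (auto simp: inner_commute)
    then show "inner (v - (v - T z v - inner v (\<eta> z) *\<^sub>R \<eta> z)) w = 0" by (simp add: inner_add_left)
  qed
qed

lemma sub_W: assumes z: "z \<in> U" shows "subspace (Wsp f \<eta> z)"
  unfolding subspace_def Wsp_def
proof (intro conjI allI ballI impI)
  show "0 \<in> {w + t *\<^sub>R \<eta> z |w t. w \<in> tan_sp f z}"
    using subspace_0[OF sub_tan[OF z]] by (intro CollectI exI[of _ 0]) simp
next
  fix a b assume "a \<in> {w + t *\<^sub>R \<eta> z |w t. w \<in> tan_sp f z}" "b \<in> {w + t *\<^sub>R \<eta> z |w t. w \<in> tan_sp f z}"
  then obtain w1 t1 w2 t2 where "a = w1 + t1 *\<^sub>R \<eta> z" "w1 \<in> tan_sp f z" "b = w2 + t2 *\<^sub>R \<eta> z" "w2 \<in> tan_sp f z"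
    by blast
  then show "a + b \<in> {w + t *\<^sub>R \<eta> z |w t. w \<in> tan_sp f z}"
    using subspace_add[OF sub_tan[OF z]]
    by (intro CollectI exI[of _ "w1 + w2"] exI[of _ "t1 + t2"]) (simp add: algebra_simps)
next
  fix c a assume "a \<in> {w + t *\<^sub>R \<eta> z |w t. w \<in> tan_sp f z}"
  then obtain w1 t1 where "a = w1 + t1 *\<^sub>R \<eta> z" "w1 \<in> tan_sp f z" by blast
  then show "c *\<^sub>R a \<in> {w + t *\<^sub>R \<eta> z |w t. w \<in> tan_sp f z}"
    using subspace_scale[OF sub_tan[OF z]]
    by (intro CollectI exI[of _ "c *\<^sub>R w1"] exI[of _ "c * t1"]) (simp add: algebra_simps)
qed

lemma proj_W: assumes z: "z \<in> U" shows "proj (Wsp f \<eta> z) v = T z v + inner v (\<eta> z) *\<^sub>R \<eta> z"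
proof (rule proj_unique[OF sub_W[OF z]])
  show "T z v + inner v (\<eta> z) *\<^sub>R \<eta> z \<in> Wsp f \<eta> z"
    unfolding Wsp_def using proj_prop(1)[OF sub_tan[OF z]] by blast
  have tv: "inner (T z v) (\<eta> z) = 0" using nor_tan[OF z cs_pt(1)[OF z]] .
  show "\<forall>w\<in>Wsp f \<eta> z. inner (v - (T z v + inner v (\<eta> z) *\<^sub>R \<eta> z)) w = 0"
  proof
    fix w assume "w \<in> Wsp f \<eta> z"
    then obtain X t where w: "w = D f z X + t *\<^sub>R \<eta> z" unfolding Wsp_def tan_sp_def by blast
    have "inner (v - T z v) (D f z X) = 0" by (rule T_orth[OF z])
    moreover have "inner (v - T z v - inner v (\<eta> z) *\<^sub>R \<eta> z) (\<eta> z) = 0"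
      using tv eta_eta[OF z] by (simp add: inner_diff_left)
    moreover have "inner (\<eta> z) (D f z X) = 0" by (rule eta_nor[OF z])
    ultimately have "inner (v - T z v - inner v (\<eta> z) *\<^sub>R \<eta> z) (D f z X) = 0"
       "inner (v - T z v - inner v (\<eta> z) *\<^sub>R \<eta> z) (\<eta> z) = 0"
      by (simp_all add: inner_diff_left)
    then show "inner (v - (T z v + inner v (\<eta> z) *\<^sub>R \<eta> z)) w = 0"
      unfolding w by (simp add: inner_add_right algebra_simps)
  qed
qed

lemma Lop_A: assumes z: "z \<in> U" shows "Lop f \<tau> z (D f z V) = D \<tau> z V"
proof -
  have "(THE X. D f z X = D f z V) = V" using injA[OF z] by (auto dest: injD)
  then show ?thesis unfolding Lop_def by simp
qed

definition yco :: "real^'n \<Rightarrow> real^'n" where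
  "yco z = sol (gram (D f z)) (\<chi> i. - inner (D \<tau> z (axis i 1)) (\<eta> z))"

lemma yco_inner: assumes z: "z \<in> U" shows "inner (D f z (yco z)) (D f z X) + inner (D \<tau> z X) (\<eta> z) = 0"
proof -
  have gi: "inner (D f z (axis j 1)) (D f z (yco z)) = - inner (D \<tau> z (axis j 1)) (\<eta> z)" for j
    unfolding yco_def using gram_sol_inner[OF linA[OF z] injA[OF z]] by simp
  have "inner (D f z (yco z)) (D f z X) = (\<Sum>j\<in>UNIV. X$j * inner (D f z (axis j 1)) (D f z (yco z)))"
    by (subst lin_expand[OF linA[OF z], of X]) (simp add: inner_sum_right inner_commute)
  also have "\<dots> = - (\<Sum>j\<in>UNIV. X$j * inner (D \<tau> z (axis j 1)) (\<eta> z))"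
    using gi by (simp add: sum_negf)
  also have "\<dots> = - inner (D \<tau> z X) (\<eta> z)"
  proof -
    have "inner (D \<tau> z X) (\<eta> z) = (\<Sum>j\<in>UNIV. X$j * inner (D \<tau> z (axis j 1)) (\<eta> z))"
      by (subst lin_expand[OF linT[OF z], of X]) (simp add: inner_sum_left)
    then show ?thesis by simp
  qed
  finally show ?thesis by simp
qed

lemma Ytan_eq: assumes z: "z \<in> U" shows "Ytan f \<tau> \<eta> z = D f z (yco z)"
  unfolding Ytan_def
proof (rule the_equality)
  show "D f z (yco z) \<in> tan_sp f z \<and> (\<forall>X. inner (D f z (yco z)) (D f z X) + inner (D \<tau> z X) (\<eta> z) = 0)"
    using yco_inner[OF z] unfolding tan_sp_def by blast
  fix y assume y: "y \<in> tan_sp f z \<and> (\<forall>X. inner y (D f z X) + inner (D \<tau> z X) (\<eta> z) = 0)"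
  then obtain V where V: "y = D f z V" unfolding tan_sp_def by blast
  have "inner (y - D f z (yco z)) (D f z X) = 0" for X
  proof -
    have "inner y (D f z X) + inner (D \<tau> z X) (\<eta> z) = 0" using y by blast
    then show ?thesis using yco_inner[OF z, of X] by (simp add: inner_diff_left)
  qed
  then have "inner (y - D f z (yco z)) (D f z (V - yco z)) = 0" by blast
  then have "inner (y - D f z (yco z)) (y - D f z (yco z)) = 0"
    using V linear_diff[OF linA[OF z]] by simp
  then show "y = D f z (yco z)" by simp
qed

lemma Ytan_props: assumes z: "z \<in> U"
  shows "T z (Ytan f \<tau> \<eta> z) = Ytan f \<tau> \<eta> z"
    "inner (Ytan f \<tau> \<eta> z) (D f z X) + inner (D \<tau> z X) (\<eta> z) = 0"
    "inner (Ytan f \<tau> \<eta> z) (\<eta> z) = 0"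
  using T_f1[OF z] yco_inner[OF z] eta_nor[OF z] Ytan_eq[OF z] by (auto simp: inner_commute)

end

context bset
begin

lemma bend_pol: assumes z: "z \<in> U" shows "inner (D f z P) (D \<tau> z Q) + inner (D f z Q) (D \<tau> z P) = 0"
proof -
  have "inner (D f z (P + Q)) (D \<tau> z (P + Q)) = 0" by (rule bend0[OF z])
  then show ?thesis using bend0[OF z, of P] bend0[OF z, of Q]
    by (simp add: linear_add[OF linA[OF z]] linear_add[OF linT[OF z]] inner_add_left inner_add_right)
qed

lemma E0: assumes z: "z \<in> U"
  shows "inner (D2 f z Z X) (D \<tau> z V) + inner (D2 \<tau> z Z X) (D f z V) = 0"
proof -
  define S where "S P Q R = inner (D2 f z R P) (D \<tau> z Q) + inner (D2 \<tau> z R P) (D f z Q)" for P Q R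
  have q0: "S P Q R + S Q P R = 0" for P Q R
  proof -
    have "inner (D2 f z R P) (D \<tau> z Q) + inner (D f z P) (D2 \<tau> z R Q)
        + inner (D2 f z R Q) (D \<tau> z P) + inner (D f z Q) (D2 \<tau> z R P) = 0"
      by (rule deriv_inner2_const[OF U z hasD2[OF smf U z] hasD2[OF smt U z] hasD2[OF smf U z] hasD2[OF smt U z]])
         (rule bend_pol)
    then show ?thesis unfolding S_def by (simp add: inner_commute algebra_simps)
  qed
  have sy: "S P Q R = S R Q P" for P Q R
    unfolding S_def D2_sym[OF smf U z, of R P] D2_sym[OF smt U z, of R P] ..
  have "S X V Z = 0"
  proof -
    have "S X V Z = - S V X Z" using q0[of X V Z] by simp
    also have "\<dots> = - S Z X V" using sy by simp
    also have "\<dots> = S X Z V" using q0[of Z X V] by simp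
    also have "\<dots> = S V Z X" using sy by simp
    also have "\<dots> = - S Z V X" using q0[of V Z X] by simp
    also have "\<dots> = - S X V Z" using sy by simp
    finally show ?thesis by simp
  qed
  then show ?thesis unfolding S_def .
qed

lemma E1: assumes x: "x \<in> U"
  shows "inner (D2 f x Z X) (D2 \<tau> x Y V) + inner (D2 \<tau> x Z X) (D2 f x Y V)
       = inner (D2 f x Y X) (D2 \<tau> x Z V) + inner (D2 \<tau> x Y X) (D2 f x Z V)"
proof -
  have h: "inner (D3 f x Y Z X) (D \<tau> x V) + inner (D2 f x Z X) (D2 \<tau> x Y V)
     + inner (D3 \<tau> x Y Z X) (D f x V) + inner (D2 \<tau> x Z X) (D2 f x Y V) = 0" for Y Z
    by (rule deriv_inner2_const[OF U x hasD3[OF smf U x] hasD2[OF smt U x] hasD3[OF smt U x] hasD2[OF smf U x]])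
       (rule E0)
  show ?thesis using h[of Y Z] h[of Z Y] D3_sym[OF smf U x, of Y Z X] D3_sym[OF smt U x, of Y Z X]
    by simp
qed

definition zeta :: "real^'n \<Rightarrow> real^'m" where "zeta z = Ytan f \<tau> \<eta> z + \<xi> z"

lemma star_z: assumes z: "z \<in> U"
  shows "inner (D2 \<tau> z X Z) (\<eta> z) + inner (D2 f z X Z) (zeta z) = 0"
proof -
  have xin: "\<xi> z \<in> nor_sp f z" using cs_pt(3)[OF z] unfolding Rsp_def by blast
  have sff: "inner (sff f z X Z) (\<xi> z) = inner (D2 f z X Z) (\<xi> z)"
    unfolding sff_def proj_nor[OF z] D2_def using nor_tan[OF z xin] by (simp add: inner_diff_left)
  have d1: "D (\<lambda>w. Lop f \<tau> w (D f w Z)) z X = D2 \<tau> z X Z"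
  proof -
    have "D (\<lambda>w. Lop f \<tau> w (D f w Z)) z = (\<lambda>X. D2 \<tau> z X Z)"
      by (rule D_transform(1)[OF U z _ hasD2[OF smt U z]]) (rule Lop_A)
    then show ?thesis by simp
  qed
  obtain V where V: "T z (D2 f z X Z) = D f z V" using T_range[OF z] by blast
  have lc: "Lop f \<tau> z (lc f (\<lambda>w. D f w Z) z X) = D \<tau> z V"
    unfolding lc_def using V Lop_A[OF z] by (simp add: D2_def)
  have "inner (D \<tau> z V) (\<eta> z) = - inner (Ytan f \<tau> \<eta> z) (D2 f z X Z)"
  proof -
    have "inner (D \<tau> z V) (\<eta> z) = - inner (Ytan f \<tau> \<eta> z) (D f z V)" using Ytan_props(2)[OF z, of V] by simp
    also have "\<dots> = - inner (T z (Ytan f \<tau> \<eta> z)) (D2 f z X Z)" using V T_self[OF z, of "Ytan f \<tau> \<eta> z" "D2 f z X Z"] by simp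
    also have "\<dots> = - inner (Ytan f \<tau> \<eta> z) (D2 f z X Z)" using Ytan_props(1)[OF z] by simp
    finally show ?thesis .
  qed
  then have bt: "inner (Bten f \<tau> z X Z) (\<eta> z) = inner (D2 \<tau> z X Z) (\<eta> z) + inner (Ytan f \<tau> \<eta> z) (D2 f z X Z)"
    unfolding Bten_def d1 lc by (simp add: inner_diff_left)
  have beta: "inner (beta f \<tau> z X Z) (\<eta> z) = inner (Bten f \<tau> z X Z) (\<eta> z)"
    unfolding beta_def proj_nor[OF z] using nor_tan[OF z cs_pt(1)[OF z]] by (simp add: inner_diff_left)
  show ?thesis using cs_pt(4)[OF z, of X Z] unfolding beta bt sff zeta_def
    by (simp add: inner_add_right inner_commute algebra_simps)
qed

lemma Dfj_diff: "x \<in> U \<Longrightarrow> (\<lambda>z. D f z v) differentiable (at x)"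
  using hasD2[OF smf U] unfolding differentiable_def by blast
lemma Dtj_diff: "x \<in> U \<Longrightarrow> (\<lambda>z. D \<tau> z v) differentiable (at x)"
  using hasD2[OF smt U] unfolding differentiable_def by blast
lemma eta_diff: "x \<in> U \<Longrightarrow> \<eta> differentiable (at x)"
  using smooth_hasD[OF sme U] unfolding differentiable_def by blast
lemma xi_diff: "x \<in> U \<Longrightarrow> \<xi> differentiable (at x)"
  using smooth_hasD[OF smx U] unfolding differentiable_def by blast

lemma gram_diff: "x \<in> U \<Longrightarrow> (\<lambda>z. gram (D f z) $ i $ j) differentiable (at x)"
  unfolding gram_def using Dfj_diff by simp

lemma coef_diff: assumes x: "x \<in> U" and r: "\<And>i. (\<lambda>z. r z $ i) differentiable (at x)"
  shows "((\<lambda>z. sol (gram (D f z)) (r z)) has_derivative D (\<lambda>z. sol (gram (D f z)) (r z)) x) (at x)"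
proof -
  have "(\<lambda>z. sol (gram (D f z)) (r z)) differentiable (at x)"
    by (rule sol_differentiable[OF gram_diff[OF x] r gram_det[OF linA[OF x] injA[OF x]]])
  then show ?thesis unfolding D_def using frechet_derivative_works by blast
qed

lemma apply_deriv: assumes x: "x \<in> U" and c: "(c has_derivative c') (at x)"
  shows "((\<lambda>z. D f z (c z)) has_derivative (\<lambda>h. D f x (c' h) + D2 f x h (c x))) (at x)"
    "((\<lambda>z. D \<tau> z (c z)) has_derivative (\<lambda>h. D \<tau> x (c' h) + D2 \<tau> x h (c x))) (at x)"
proof -
  have "((\<lambda>z. D f z (c z)) has_derivative (\<lambda>h. D f x (c' h) + (\<Sum>j\<in>UNIV. (c x $ j) *\<^sub>R D2 f x h (axis j 1)))) (at x)"
    by (rule deriv_apply[OF U x linA hasD2[OF smf U x] c])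
  then show "((\<lambda>z. D f z (c z)) has_derivative (\<lambda>h. D f x (c' h) + D2 f x h (c x))) (at x)"
    using D2_lin'[OF smf U x, of _ "c x"] by simp
  have "((\<lambda>z. D \<tau> z (c z)) has_derivative (\<lambda>h. D \<tau> x (c' h) + (\<Sum>j\<in>UNIV. (c x $ j) *\<^sub>R D2 \<tau> x h (axis j 1)))) (at x)"
    by (rule deriv_apply[OF U x linT hasD2[OF smt U x] c])
  then show "((\<lambda>z. D \<tau> z (c z)) has_derivative (\<lambda>h. D \<tau> x (c' h) + D2 \<tau> x h (c x))) (at x)"
    using D2_lin'[OF smt U x, of _ "c x"] by simp
qed

lemma zeta_hasD: assumes x: "x \<in> U" shows "(zeta has_derivative D zeta x) (at x)"
proof -
  have r: "(\<lambda>z. (\<chi> i. - inner (D \<tau> z (axis i 1)) (\<eta> z)) $ i) differentiable (at x)" for i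
    using Dtj_diff[OF x] eta_diff[OF x] by simp
  have yd: "(yco has_derivative D yco x) (at x)"
    unfolding yco_def by (rule coef_diff[OF x r])
  have H: "((\<lambda>z. D f z (yco z) + \<xi> z) has_derivative
      (\<lambda>h. D f x (D yco x h) + D2 f x h (yco x) + D \<xi> x h)) (at x)"
    by (rule has_derivative_add[OF apply_deriv(1)[OF x yd] smooth_hasD[OF smx U x]])
  have Z: "(zeta has_derivative (\<lambda>h. D f x (D yco x h) + D2 f x h (yco x) + D \<xi> x h)) (at x)"
    by (rule D_transform(2)[OF U x _ H]) (simp add: zeta_def Ytan_eq)
  then show ?thesis using D_eq[OF Z] by simp
qed

lemma eta1: assumes x: "x \<in> U" shows "inner (D \<eta> x Y) (\<eta> x) = 0"
proof -
  have "inner (D \<eta> x Y) (\<eta> x) + inner (\<eta> x) (D \<eta> x Y) = 0"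
    by (rule deriv_inner_const[OF U x smooth_hasD[OF sme U x] smooth_hasD[OF sme U x]]) (rule eta_eta)
  then show ?thesis by (simp add: inner_commute)
qed

lemma F7: assumes x: "x \<in> U"
  shows "inner (D2 \<tau> x X Z) (D \<eta> x Y) - inner (D2 \<tau> x Y Z) (D \<eta> x X)
       + inner (D2 f x X Z) (D zeta x Y) - inner (D2 f x Y Z) (D zeta x X) = 0"
proof -
  have h: "inner (D3 \<tau> x Y X Z) (\<eta> x) + inner (D2 \<tau> x X Z) (D \<eta> x Y)
     + inner (D3 f x Y X Z) (zeta x) + inner (D2 f x X Z) (D zeta x Y) = 0" for X Y
    by (rule deriv_inner2_const[OF U x hasD3[OF smt U x] smooth_hasD[OF sme U x] hasD3[OF smf U x] zeta_hasD[OF x]])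
       (rule star_z)
  show ?thesis using h[of X Y] h[of Y X] D3_sym[OF smf U x, of Y X Z] D3_sym[OF smt U x, of Y X Z]
    by simp
qed

lemma zeta_eta: "z \<in> U \<Longrightarrow> inner (zeta z) (\<eta> z) = 0"
  unfolding zeta_def using Ytan_props(3) xi_eta by (simp add: inner_add_left)

lemma F8: assumes x: "x \<in> U" shows "inner (D zeta x Y) (\<eta> x) + inner (zeta x) (D \<eta> x Y) = 0"
  by (rule deriv_inner_const[OF U x zeta_hasD[OF x] smooth_hasD[OF sme U x]]) (rule zeta_eta)

lemma zeta_tan: "z \<in> U \<Longrightarrow> inner (zeta z) (D f z V) + inner (D \<tau> z V) (\<eta> z) = 0"
  unfolding zeta_def using Ytan_props(2) xi_nor by (simp add: inner_add_left)

lemma F9: assumes x: "x \<in> U"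
  shows "inner (D zeta x Y) (D f x V) + inner (zeta x) (D2 f x Y V) + inner (D2 \<tau> x Y V) (\<eta> x)
     + inner (D \<tau> x V) (D \<eta> x Y) = 0"
  by (rule deriv_inner2_const[OF U x zeta_hasD[OF x] hasD2[OF smf U x] hasD2[OF smt U x] smooth_hasD[OF sme U x]])
     (rule zeta_tan)

end

context bset
begin

definition sc :: "(real^'n \<Rightarrow> real^'m) \<Rightarrow> real^'n \<Rightarrow> real" where
  "sc lam z = inner (lam z) (\<eta> z)"
definition cc :: "(real^'n \<Rightarrow> real^'m) \<Rightarrow> real^'n \<Rightarrow> real^'n" where
  "cc lam z = sol (gram (D f z)) (\<chi> i. inner (D f z (axis i 1)) (lam z - sc lam z *\<^sub>R \<eta> z))"

lemma lam_dec: assumes z: "z \<in> U" and l: "lam z \<in> Wsp f \<eta> z"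
  shows "lam z = D f z (cc lam z) + sc lam z *\<^sub>R \<eta> z"
proof -
  obtain V t where w: "lam z = D f z V + t *\<^sub>R \<eta> z" using l unfolding Wsp_def tan_sp_def by blast
  have s: "sc lam z = t" unfolding sc_def w using eta_nor[OF z, of V] eta_eta[OF z]
    by (simp add: inner_add_left inner_add_right inner_commute)
  have "lam z - sc lam z *\<^sub>R \<eta> z = D f z V" using w s by simp
  then have "D f z (cc lam z) = lam z - sc lam z *\<^sub>R \<eta> z"
    unfolding cc_def using gram_sol_range[OF linA[OF z] injA[OF z], of "D f z V"] by simp
  then show ?thesis by simp
qed

context
  fixes lam x
  assumes x: "x \<in> U" and sl: "smooth_on U lam" and lW: "\<forall>z\<in>U. lam z \<in> Wsp f \<eta> z"
begin

lemma lam_hasD: "(lam has_derivative D lam x) (at x)" by (rule smooth_hasD[OF sl U x])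

lemma sc_hasD: "(sc lam has_derivative D (sc lam) x) (at x)"
proof -
  have "sc lam differentiable (at x)" unfolding sc_def
    using lam_hasD smooth_hasD[OF sme U x] differentiable_def differentiable_inner by blast
  then show ?thesis unfolding D_def using frechet_derivative_works by blast
qed

lemma cc_hasD: "(cc lam has_derivative D (cc lam) x) (at x)"
proof -
  have r: "(\<lambda>z. (\<chi> i. inner (D f z (axis i 1)) (lam z - sc lam z *\<^sub>R \<eta> z)) $ i) differentiable (at x)" for i
  proof -
    have "lam differentiable (at x)" using lam_hasD differentiable_def by blast
    moreover have "sc lam differentiable (at x)" using sc_hasD differentiable_def by blast
    ultimately show ?thesis using Dfj_diff[OF x] eta_diff[OF x] by simp
  qed
  show ?thesis unfolding cc_def by (rule coef_diff[OF x r])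
qed

lemma Dlam: "D lam x X = D f x (D (cc lam) x X) + D2 f x X (cc lam x) + D (sc lam) x X *\<^sub>R \<eta> x + sc lam x *\<^sub>R D \<eta> x X"
proof -
  have H: "((\<lambda>z. D f z (cc lam z) + sc lam z *\<^sub>R \<eta> z) has_derivative
     (\<lambda>h. D f x (D (cc lam) x h) + D2 f x h (cc lam x) + (sc lam x *\<^sub>R D \<eta> x h + D (sc lam) x h *\<^sub>R \<eta> x))) (at x)"
    by (rule has_derivative_add[OF apply_deriv(1)[OF x cc_hasD] has_derivative_scaleR[OF sc_hasD smooth_hasD[OF sme U x]]])
  have "D lam x = (\<lambda>h. D f x (D (cc lam) x h) + D2 f x h (cc lam x) + (sc lam x *\<^sub>R D \<eta> x h + D (sc lam) x h *\<^sub>R \<eta> x))"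
    by (rule D_transform(1)[OF U x _ H]) (use lW lam_dec in blast)
  then show ?thesis by (simp add: algebra_simps)
qed

lemma Lbar_lam: assumes z: "z \<in> U" shows "Lbar f \<tau> \<eta> \<xi> z (lam z) = D \<tau> z (cc lam z) + sc lam z *\<^sub>R zeta z"
proof -
  have "T z (lam z) = T z (D f z (cc lam z)) + sc lam z *\<^sub>R T z (\<eta> z)"
    by (subst lam_dec[where lam=lam, OF z lW[rule_format, OF z]])
       (simp add: linear_add[OF T_lin[OF z]] linear_scale[OF T_lin[OF z]])
  then have "T z (lam z) = D f z (cc lam z)" using T_f1[OF z] T_eta[OF z] by simp
  then show ?thesis unfolding Lbar_def using Lop_A[OF z] by (simp add: sc_def zeta_def)
qed

lemma DLbar: "D (\<lambda>z. Lbar f \<tau> \<eta> \<xi> z (lam z)) x X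
   = D \<tau> x (D (cc lam) x X) + D2 \<tau> x X (cc lam x) + D (sc lam) x X *\<^sub>R zeta x + sc lam x *\<^sub>R D zeta x X"
proof -
  have H: "((\<lambda>z. D \<tau> z (cc lam z) + sc lam z *\<^sub>R zeta z) has_derivative
     (\<lambda>h. D \<tau> x (D (cc lam) x h) + D2 \<tau> x h (cc lam x) + (sc lam x *\<^sub>R D zeta x h + D (sc lam) x h *\<^sub>R zeta x))) (at x)"
    by (rule has_derivative_add[OF apply_deriv(2)[OF x cc_hasD] has_derivative_scaleR[OF sc_hasD zeta_hasD[OF x]]])
  have "D (\<lambda>z. Lbar f \<tau> \<eta> \<xi> z (lam z)) x = (\<lambda>h. D \<tau> x (D (cc lam) x h) + D2 \<tau> x h (cc lam x) + (sc lam x *\<^sub>R D zeta x h + D (sc lam) x h *\<^sub>R zeta x))"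
    by (rule D_transform(1)[OF U x _ H]) (rule Lbar_lam)
  then show ?thesis by (simp add: algebra_simps)
qed

end

definition tt :: "real^'n \<Rightarrow> real^'m \<Rightarrow> real^'m" where "tt x v = Lop f \<tau> x (T x v)"
definition NN :: "real^'n \<Rightarrow> real^'m \<Rightarrow> real^'m" where "NN x v = v - T x v - inner v (\<eta> x) *\<^sub>R \<eta> x"

context fixes x assumes x: "x \<in> U"
begin

lemma tt_def2: "T x u = D f x V \<Longrightarrow> tt x u = D \<tau> x V"
  unfolding tt_def using Lop_A[OF x] by simp

lemma tt_f1: "tt x (D f x V) = D \<tau> x V" using tt_def2 T_f1[OF x] by blast

lemma tt_lin: "tt x (u + v) = tt x u + tt x v" "tt x (c *\<^sub>R u) = c *\<^sub>R tt x u"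
proof -
  obtain V1 where V1: "T x u = D f x V1" using T_range[OF x] by blast
  obtain V2 where V2: "T x v = D f x V2" using T_range[OF x] by blast
  have "T x (u + v) = D f x (V1 + V2)"
    using V1 V2 linear_add[OF T_lin[OF x]] linear_add[OF linA[OF x]] by simp
  then show "tt x (u + v) = tt x u + tt x v"
    using tt_def2 V1 V2 linear_add[OF linT[OF x]] by simp
  have "T x (c *\<^sub>R u) = D f x (c *\<^sub>R V1)"
    using V1 linear_scale[OF T_lin[OF x]] linear_scale[OF linA[OF x]] by simp
  then show "tt x (c *\<^sub>R u) = c *\<^sub>R tt x u"
    using tt_def2 V1 linear_scale[OF linT[OF x]] by simp
qed

lemma tt_eta: "tt x (\<eta> x) = 0"
proof -
  have "T x (\<eta> x) = D f x 0" using T_eta[OF x] linear_0[OF linA[OF x]] by simp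
  then show ?thesis using tt_def2 linear_0[OF linT[OF x]] by simp
qed

lemma Lbar_projW: "Lbar f \<tau> \<eta> \<xi> x (proj (Wsp f \<eta> x) v) = tt x v + inner v (\<eta> x) *\<^sub>R zeta x"
proof -
  obtain V where V: "T x v = D f x V" using T_range[OF x] by blast
  have a: "T x (T x v + inner v (\<eta> x) *\<^sub>R \<eta> x) = T x v"
    using V T_f1[OF x] T_eta[OF x] linear_add[OF T_lin[OF x]] linear_scale[OF T_lin[OF x]] by simp
  have b: "inner (T x v + inner v (\<eta> x) *\<^sub>R \<eta> x) (\<eta> x) = inner v (\<eta> x)"
    using nor_tan[OF x cs_pt(1)[OF x]] eta_eta[OF x] by (simp add: inner_add_left)
  show ?thesis unfolding proj_W[OF x] Lbar_def a b tt_def zeta_def ..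
qed

lemma NN_lin: "NN x (u + v) = NN x u + NN x v" "NN x (c *\<^sub>R u) = c *\<^sub>R NN x u"
  unfolding NN_def using linear_add[OF T_lin[OF x]] linear_scale[OF T_lin[OF x]]
  by (simp_all add: inner_add_left algebra_simps)

lemma NN_f1: "NN x (D f x V) = 0" unfolding NN_def using T_f1[OF x] eta_nor[OF x] by (simp add: inner_commute)
lemma NN_eta: "NN x (\<eta> x) = 0" unfolding NN_def using T_eta[OF x] eta_eta[OF x] by simp
lemma projR_NN: "proj (Rsp f \<eta> x) v = NN x v" unfolding NN_def by (rule proj_R[OF x])

end
end

lemma assemble:
  fixes aT bT :: "'a \<Rightarrow> 'c \<Rightarrow> 'b::real_inner" and aE bE :: "'a \<Rightarrow> 'b"
  assumes Q1: "\<And>X Z Y W. inner (aT X Z) (bT Y W) + inner (bT X Z) (aT Y W) = inner (aT X W) (bT Y Z) + inner (bT X W) (aT Y Z)"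
    and Q2: "\<And>X Y Z. inner (aT X Z) (bE Y) + inner (bT X Z) (aE Y) = inner (aT Y Z) (bE X) + inner (bT Y Z) (aE X)"
    and P: "\<And>X Z s. P X Z s = (aT X Z + s *\<^sub>R aE X + (bT X Z + s *\<^sub>R bE X), aT X Z + s *\<^sub>R aE X - (bT X Z + s *\<^sub>R bE X))"
  shows "iip (P X Z s) (P Y W r) - iip (P X W r) (P Y Z s) = 0"
proof -
  have q1: "inner (aT X Z) (bT Y W) + inner (bT X Z) (aT Y W) = inner (aT X W) (bT Y Z) + inner (bT X W) (aT Y Z)"
    by (rule Q1)
  have q2: "r * (inner (aT X Z) (bE Y) + inner (bT X Z) (aE Y)) = r * (inner (aT Y Z) (bE X) + inner (bT Y Z) (aE X))"
    using Q2[of X Z Y] by simp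
  have q3: "s * (inner (aT X W) (bE Y) + inner (bT X W) (aE Y)) = s * (inner (aT Y W) (bE X) + inner (bT Y W) (aE X))"
    using Q2[of X W Y] by simp
  show ?thesis using q1 q2 q3 unfolding iip_def P
    by (simp add: inner_add_left inner_add_right inner_diff_left inner_diff_right algebra_simps inner_commute)
qed

context bset
begin

definition bTv :: "real^'n \<Rightarrow> real^'n \<Rightarrow> real^'n \<Rightarrow> real^'m" where
  "bTv x X Z = D2 \<tau> x X Z - tt x (D2 f x X Z) - inner (D2 f x X Z) (\<eta> x) *\<^sub>R zeta x"
definition bEv :: "real^'n \<Rightarrow> real^'n \<Rightarrow> real^'m" where
  "bEv x X = D zeta x X - tt x (D \<eta> x X) - inner (D \<eta> x X) (\<eta> x) *\<^sub>R zeta x"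

lemma phi_eq: assumes x: "x \<in> U" and sl: "smooth_on U lam" and lW: "\<forall>z\<in>U. lam z \<in> Wsp f \<eta> z"
  shows "phi f \<tau> \<eta> \<xi> x X lam =
    (NN x (D2 f x X (cc lam x)) + sc lam x *\<^sub>R NN x (D \<eta> x X) + (NN x (bTv x X (cc lam x)) + sc lam x *\<^sub>R NN x (bEv x X)),
     NN x (D2 f x X (cc lam x)) + sc lam x *\<^sub>R NN x (D \<eta> x X) - (NN x (bTv x X (cc lam x)) + sc lam x *\<^sub>R NN x (bEv x X)))"
proof -
  define c s cd sd where "c = cc lam x" and "s = sc lam x" and "cd = D (cc lam) x X" and "sd = D (sc lam) x X"
  have DL: "D lam x X = D f x cd + D2 f x X c + sd *\<^sub>R \<eta> x + s *\<^sub>R D \<eta> x X"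
    unfolding c_def s_def cd_def sd_def using Dlam[OF x sl lW] by simp
  have a: "proj (Rsp f \<eta> x) (D lam x X) = NN x (D2 f x X c) + s *\<^sub>R NN x (D \<eta> x X)"
    unfolding projR_NN[OF x] DL using NN_lin[OF x] NN_f1[OF x] NN_eta[OF x] by simp
  have ttD: "tt x (D lam x X) = D \<tau> x cd + tt x (D2 f x X c) + s *\<^sub>R tt x (D \<eta> x X)"
    unfolding DL using tt_lin[OF x] tt_f1[OF x] tt_eta[OF x] by simp
  have inD: "inner (D lam x X) (\<eta> x) = inner (D2 f x X c) (\<eta> x) + sd + s * inner (D \<eta> x X) (\<eta> x)"
    unfolding DL using eta_nor[OF x, of cd] eta_eta[OF x]
    by (simp add: inner_add_left inner_add_right inner_commute)
  have cov: "covLbar f \<tau> \<eta> \<xi> x X lam = bTv x X c + s *\<^sub>R bEv x X"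
    unfolding covLbar_def DLbar[OF x sl lW] Lbar_projW[OF x] ttD inD bTv_def bEv_def
      c_def[symmetric] s_def[symmetric] cd_def[symmetric] sd_def[symmetric]
    by (simp add: algebra_simps)
  have b: "proj (Rsp f \<eta> x) (covLbar f \<tau> \<eta> \<xi> x X lam) = NN x (bTv x X c) + s *\<^sub>R NN x (bEv x X)"
    unfolding projR_NN[OF x] cov using NN_lin[OF x] by simp
  show ?thesis unfolding phi_def Let_def a b c_def s_def cd_def sd_def ..
qed

lemma QQ: assumes x: "x \<in> U"
  shows "inner (NN x (D2 f x X Z)) (NN x (bTv x Y W)) + inner (NN x (bTv x X Z)) (NN x (D2 f x Y W))
          = inner (D2 f x X Z) (D2 \<tau> x Y W) + inner (D2 \<tau> x X Z) (D2 f x Y W)"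
    and "inner (NN x (D2 f x X Z)) (NN x (bEv x Y)) + inner (NN x (bTv x X Z)) (NN x (D \<eta> x Y))
          = inner (D2 f x X Z) (D zeta x Y) + inner (D2 \<tau> x X Z) (D \<eta> x Y)"
proof -
  have zx: "zeta x = Ytan f \<tau> \<eta> x + \<xi> x" by (simp add: zeta_def)
  have F6': "\<And>X Z. inner (D2 \<tau> x X Z) (\<eta> x) + inner (D2 f x X Z) (Ytan f \<tau> \<eta> x + \<xi> x) = 0"
    using star_z[OF x] zx by simp
  have F8': "\<And>Y. inner (D zeta x Y) (\<eta> x) + inner (Ytan f \<tau> \<eta> x + \<xi> x) (D \<eta> x Y) = 0"
    using F8[OF x] zx by simp
  have F9': "\<And>Y V. inner (D zeta x Y) (D f x V) + inner (Ytan f \<tau> \<eta> x + \<xi> x) (D2 f x Y V)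
      + inner (D2 \<tau> x Y V) (\<eta> x) + inner (D \<tau> x V) (D \<eta> x Y) = 0"
    using F9[OF x] zx by simp
  have Nd: "NN x = (\<lambda>v. v - T x v - inner v (\<eta> x) *\<^sub>R \<eta> x)" by (simp add: NN_def fun_eq_iff)
  have bTd: "bTv x = (\<lambda>X Z. D2 \<tau> x X Z - tt x (D2 f x X Z) - inner (D2 f x X Z) (\<eta> x) *\<^sub>R (Ytan f \<tau> \<eta> x + \<xi> x))"
    by (simp add: bTv_def fun_eq_iff zx)
  have bEd: "bEv x = (\<lambda>X. D zeta x X - tt x (D \<eta> x X) - inner (D \<eta> x X) (\<eta> x) *\<^sub>R (Ytan f \<tau> \<eta> x + \<xi> x))"
    by (simp add: bEv_def fun_eq_iff zx)
  note A = alg_Q[where fA="D f x" and tA="D \<tau> x" and fB="D2 f x" and tB="D2 \<tau> x" and T="T x" and t="tt x"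
      and \<eta>="\<eta> x" and \<xi>="\<xi> x" and y="Ytan f \<tau> \<eta> x" and eA="D \<eta> x" and zA="D zeta x"
      and N="NN x" and bT="bTv x" and bE="bEv x",
      OF linA[OF x] linT[OF x] T_lin[OF x] T_self[OF x] T_range[OF x] T_f1[OF x] tt_def2[OF x]
      bend_pol[OF x] eta_nor[OF x] eta_eta[OF x] eta1[OF x] xi_nor[OF x] xi_eta[OF x]
      Ytan_props(1)[OF x] Ytan_props(2)[OF x] E0[OF x] F6' F8' F9' Nd bTd bEd]
  show "inner (NN x (D2 f x X Z)) (NN x (bTv x Y W)) + inner (NN x (bTv x X Z)) (NN x (D2 f x Y W))
          = inner (D2 f x X Z) (D2 \<tau> x Y W) + inner (D2 \<tau> x X Z) (D2 f x Y W)" by (rule A(1))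
  show "inner (NN x (D2 f x X Z)) (NN x (bEv x Y)) + inner (NN x (bTv x X Z)) (NN x (D \<eta> x Y))
          = inner (D2 f x X Z) (D zeta x Y) + inner (D2 \<tau> x X Z) (D \<eta> x Y)" by (rule A(2))
qed

lemma main: assumes x: "x \<in> U"
    and "smooth_on U lam" and "\<forall>z\<in>U. lam z \<in> Wsp f \<eta> z"
    and "smooth_on U del" and "\<forall>z\<in>U. del z \<in> Wsp f \<eta> z"
  shows "iip (phi f \<tau> \<eta> \<xi> x X lam) (phi f \<tau> \<eta> \<xi> x Y del)
       - iip (phi f \<tau> \<eta> \<xi> x X del) (phi f \<tau> \<eta> \<xi> x Y lam) = 0"
proof -
  define P where "P X Z s = (NN x (D2 f x X Z) + s *\<^sub>R NN x (D \<eta> x X) + (NN x (bTv x X Z) + s *\<^sub>R NN x (bEv x X)),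
     NN x (D2 f x X Z) + s *\<^sub>R NN x (D \<eta> x X) - (NN x (bTv x X Z) + s *\<^sub>R NN x (bEv x X)))" for X Z s
  have e: "phi f \<tau> \<eta> \<xi> x X lam = P X (cc lam x) (sc lam x)" "phi f \<tau> \<eta> \<xi> x Y del = P Y (cc del x) (sc del x)"
     "phi f \<tau> \<eta> \<xi> x X del = P X (cc del x) (sc del x)" "phi f \<tau> \<eta> \<xi> x Y lam = P Y (cc lam x) (sc lam x)"
    unfolding P_def using phi_eq[OF x] assms(2-5) by blast+
  have Q1: "inner (NN x (D2 f x X Z)) (NN x (bTv x Y W)) + inner (NN x (bTv x X Z)) (NN x (D2 f x Y W))
     = inner (NN x (D2 f x X W)) (NN x (bTv x Y Z)) + inner (NN x (bTv x X W)) (NN x (D2 f x Y Z))" for X Z Y W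
    unfolding QQ(1)[OF x] using E1[OF x, of X Z Y W] by (simp add: inner_commute)
  have Q2: "inner (NN x (D2 f x X Z)) (NN x (bEv x Y)) + inner (NN x (bTv x X Z)) (NN x (D \<eta> x Y))
     = inner (NN x (D2 f x Y Z)) (NN x (bEv x X)) + inner (NN x (bTv x Y Z)) (NN x (D \<eta> x X))" for X Y Z
    unfolding QQ(2)[OF x] using F7[OF x, of X Z Y] by simp
  show ?thesis unfolding e
    by (rule assemble[where aT="\<lambda>X Z. NN x (D2 f x X Z)" and bT="\<lambda>X Z. NN x (bTv x X Z)"
          and aE="\<lambda>X. NN x (D \<eta> x X)" and bE="\<lambda>X. NN x (bEv x X)", OF Q1 Q2]) (simp add: P_def)
qed

end

theorem lemma18:
  fixes U :: "(real^'n) set"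
    and f \<tau> :: "real^'n \<Rightarrow> real^'m"
    and \<eta> \<xi> :: "real^'n \<Rightarrow> real^'m"
  assumes "open U"
    and "CARD('m) \<ge> CARD('n) + 2"
    and "immersion_on U f"
    and "infinitesimal_bending U f \<tau>"
    and "cond_star U f \<tau> \<eta> \<xi>"
    and "x \<in> U"
    and "smooth_on U lam" and "\<forall>z\<in>U. lam z \<in> Wsp f \<eta> z"
    and "smooth_on U del" and "\<forall>z\<in>U. del z \<in> Wsp f \<eta> z"
  shows "iip (phi f \<tau> \<eta> \<xi> x X lam) (phi f \<tau> \<eta> \<xi> x Y del)
       - iip (phi f \<tau> \<eta> \<xi> x X del) (phi f \<tau> \<eta> \<xi> x Y lam) = 0"
proof -
  interpret bset U f \<tau> \<eta> \<xi> using assms(1,3,4,5) by unfold_locales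
  show ?thesis by (rule main[OF assms(6-10)])
qed


end
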